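(* Let $k$ be a field with char $k\neq 2$ and $K=k(\sqrt{a})$ be a separable quadratic field extension of $k$ with $a \in k$. Write ${\rm Gal}(K/k)= \langle \sigma \rangle$ and extend the action of $\sigma$ to the rational function field $K(x,y)$ by $\sigma: \sqrt{a} \mapsto -\sqrt{a},\ x \mapsto x,\ y\mapsto \frac{f(x)}{y}$, where $f(x)\in k[x]\setminus \{0\}$. Then the fixed field $K(x,y)^{\langle\sigma\rangle}$ is $k$-isomorphic to the field $k(x, t_1, t_2)$ with the relation $t_1^2-at_2^2=f(x)$. Conversely, if $L_0=k(x, t_1, t_2)$ is a field extension of $k$ satisfying ${\rm trdeg}_k(L_0)=2$ and $t_1^2-at_2^2=f(x)$, a non-zero polynomial in $k[x]$, then $L_0$ is $k$-isomorphic to the fixed subfield $k(\sqrt{a})(x,y)^{\langle\sigma\rangle}$ where $\sigma$ acts by $\sqrt{a} \mapsto -\sqrt{a},\ x \mapsto x,\ y\mapsto \frac{f(x)}{y}$.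
   Context: $K(x,y)^{\langle\sigma\rangle}=\{u\in K(x,y):\sigma(u)=u\}$ denotes the fixed subfield. *)

theory Defs
  imports "HOL-Computational_Algebra.Polynomial"
begin

definition is_subfield :: "'a::field set \<Rightarrow> bool" where
  "is_subfield S \<longleftrightarrow> 0 \<in> S \<and> 1 \<in> S \<and>
     (\<forall>u\<in>S. \<forall>v\<in>S. u + v \<in> S \<and> u * v \<in> S) \<and>
     (\<forall>u\<in>S. - u \<in> S \<and> inverse u \<in> S)"

definition gen_field :: "'a::field set \<Rightarrow> 'a set" where
  "gen_field A = \<Inter> {S. is_subfield S \<and> A \<subseteq> S}"

definition field_emb :: "('k::field \<Rightarrow> 'a::field) \<Rightarrow> bool" where
  "field_emb \<iota> \<longleftrightarrow> (\<forall>u v. \<iota> (u + v) = \<iota> u + \<iota> v) \<and>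
     (\<forall>u v. \<iota> (u * v) = \<iota> u * \<iota> v) \<and> \<iota> 1 = 1"

definition alg_indep :: "'a::field set \<Rightarrow> 'a set \<Rightarrow> bool" where
  "alg_indep F B \<longleftrightarrow> finite B \<and>
     (\<forall>(M :: ('a \<Rightarrow> nat) set) c. finite M \<and> (\<forall>m\<in>M. \<forall>b. b \<notin> B \<longrightarrow> m b = 0) \<and>
        (\<forall>m\<in>M. c m \<in> F) \<and> (\<Sum>m\<in>M. c m * (\<Prod>b\<in>B. b ^ m b)) = 0
        \<longrightarrow> (\<forall>m\<in>M. c m = 0))"

definition algebraic_over :: "'a::field set \<Rightarrow> 'a \<Rightarrow> bool" where
  "algebraic_over S e \<longleftrightarrow> (\<exists>p. p \<noteq> 0 \<and> (\<forall>i. coeff p i \<in> S) \<and> poly p e = 0)"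

definition trdeg_eq :: "'a::field set \<Rightarrow> 'a set \<Rightarrow> nat \<Rightarrow> bool" where
  "trdeg_eq F E n \<longleftrightarrow> (\<exists>B. B \<subseteq> E \<and> finite B \<and> card B = n \<and> alg_indep F B \<and>
       (\<forall>e\<in>E. algebraic_over (gen_field (F \<union> B)) e))"

definition k_iso :: "('k \<Rightarrow> 'a::field) \<Rightarrow> 'a set \<Rightarrow> ('k \<Rightarrow> 'b::field) \<Rightarrow> 'b set \<Rightarrow> bool" where
  "k_iso j A i B \<longleftrightarrow> (\<exists>\<phi>. bij_betw \<phi> A B \<and>
      (\<forall>u\<in>A. \<forall>v\<in>A. \<phi> (u + v) = \<phi> u + \<phi> v \<and> \<phi> (u * v) = \<phi> u * \<phi> v) \<and>
      (\<forall>c. \<phi> (j c) = i c))"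

end

theory Submission
  imports Defs
begin

lemma gen_field_is_subfield: "is_subfield (gen_field A)"
  unfolding gen_field_def is_subfield_def by auto

lemma gen_field_incl: "A \<subseteq> gen_field A"
  unfolding gen_field_def by auto

lemma gen_field_min: "is_subfield S \<Longrightarrow> A \<subseteq> S \<Longrightarrow> gen_field A \<subseteq> S"
  unfolding gen_field_def by auto

lemma gen_field_mono: "A \<subseteq> B \<Longrightarrow> gen_field A \<subseteq> gen_field B"
  unfolding gen_field_def by auto

context fixes S :: "'a::field set" assumes sf: "is_subfield S"
begin
lemma sf_0: "0 \<in> S" using sf unfolding is_subfield_def by auto
lemma sf_1: "1 \<in> S" using sf unfolding is_subfield_def by auto
lemma sf_add: "u \<in> S \<Longrightarrow> v \<in> S \<Longrightarrow> u + v \<in> S" using sf unfolding is_subfield_def by auto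
lemma sf_mult: "u \<in> S \<Longrightarrow> v \<in> S \<Longrightarrow> u * v \<in> S" using sf unfolding is_subfield_def by auto
lemma sf_neg: "u \<in> S \<Longrightarrow> - u \<in> S" using sf unfolding is_subfield_def by auto
lemma sf_inv: "u \<in> S \<Longrightarrow> inverse u \<in> S" using sf unfolding is_subfield_def by auto
lemma sf_diff: "u \<in> S \<Longrightarrow> v \<in> S \<Longrightarrow> u - v \<in> S"
  using sf_add[of u "-v"] sf_neg[of v] by simp
lemma sf_div: "u \<in> S \<Longrightarrow> v \<in> S \<Longrightarrow> u / v \<in> S"
  using sf_mult[of u "inverse v"] sf_inv[of v] by (simp add: divide_inverse)
lemma sf_power: "u \<in> S \<Longrightarrow> u ^ n \<in> S"
  by (induction n) (auto intro: sf_1 sf_mult)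
lemma sf_sum: "(\<And>i. i \<in> I \<Longrightarrow> g i \<in> S) \<Longrightarrow> sum g I \<in> S"
  by (induction I rule: infinite_finite_induct) (auto intro: sf_0 sf_add)
lemma sf_prod: "(\<And>i. i \<in> I \<Longrightarrow> g i \<in> S) \<Longrightarrow> prod g I \<in> S"
  by (induction I rule: infinite_finite_induct) (auto intro: sf_1 sf_mult)
end

lemma map_poly_add_hom:
  assumes "h 0 = 0" "\<And>a b. h (a + b) = h a + h b"
  shows "map_poly h (p + q) = map_poly h p + map_poly h q"
  by (rule poly_eqI) (simp add: coeff_map_poly assms)

lemma map_poly_mult_hom:
  fixes h :: "'a::comm_semiring_0 \<Rightarrow> 'b::comm_semiring_0"
  assumes h0: "h 0 = 0" and ha: "\<And>a b. h (a + b) = h a + h b" and hm: "\<And>a b. h (a * b) = h a * h b"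
  shows "map_poly h (p * q) = map_poly h p * map_poly h q"
proof (rule poly_eqI)
  fix n
  have "coeff (map_poly h (p * q)) n = h (\<Sum>i\<le>n. coeff p i * coeff q (n - i))"
    by (simp add: coeff_map_poly h0 coeff_mult)
  also have "\<dots> = (\<Sum>i\<le>n. h (coeff p i * coeff q (n - i)))"
  proof -
    have hs: "h (sum g A) = (\<Sum>a\<in>A. h (g a))" for g and A :: "nat set"
      by (induction A rule: infinite_finite_induct) (simp_all add: h0 ha)
    show ?thesis by (rule hs)
  qed
  also have "\<dots> = coeff (map_poly h p * map_poly h q) n"
    by (simp add: coeff_mult coeff_map_poly h0 hm)
  finally show "coeff (map_poly h (p * q)) n = coeff (map_poly h p * map_poly h q) n" .
qed

lemma map_poly_const: "f 0 = 0 \<Longrightarrow> map_poly f [:c:] = [:f c:]"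
  by (rule poly_eqI) (simp add: coeff_map_poly coeff_pCons split: nat.split)
lemma map_poly_X: "f 0 = 0 \<Longrightarrow> map_poly f [:0, c:] = [:0, f c:]"
  by (rule poly_eqI) (simp add: coeff_map_poly coeff_pCons split: nat.split)
lemma degree_map_poly_le': "f 0 = 0 \<Longrightarrow> degree (map_poly f p) \<le> degree p"
  by (rule degree_le) (auto simp: coeff_map_poly coeff_eq_0)

lemma poly_sum_bound:
  fixes p :: "'a::comm_semiring_1 poly"
  assumes "degree p \<le> N"
  shows "poly p x = (\<Sum>i\<le>N. coeff p i * x ^ i)"
proof -
  have "poly p x = (\<Sum>i\<le>degree p. coeff p i * x ^ i)" by (rule poly_altdef)
  also have "\<dots> = (\<Sum>i\<le>N. coeff p i * x ^ i)"
    by (rule sum.mono_neutral_left) (use assms in \<open>auto simp: coeff_eq_0\<close>)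
  finally show ?thesis .
qed

section \<open>Embeddings\<close>

locale kemb =
  fixes j :: "'k::field \<Rightarrow> 'l::field"
  assumes emb: "field_emb j"
begin

lemma j_add: "j (u + v) = j u + j v" using emb unfolding field_emb_def by auto
lemma j_mult: "j (u * v) = j u * j v" using emb unfolding field_emb_def by auto
lemma j_1[simp]: "j 1 = 1" using emb unfolding field_emb_def by auto
lemma j_0[simp]: "j 0 = 0"
  by (metis add_cancel_right_right j_add)
lemma j_neg: "j (- u) = - j u"
  using j_add[of u "-u"] by (metis add.commute eq_neg_iff_add_eq_0 j_0 add.right_inverse)
lemma j_diff: "j (u - v) = j u - j v"
  using j_add[of u "-v"] j_neg[of v] by simp
lemma j_inverse: "j (inverse u) = inverse (j u)"
proof (cases "u = 0")
  case False
  have "j u * j (inverse u) = 1" using j_mult[of u "inverse u"] False by simp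
  thus ?thesis by (simp add: inverse_unique)
qed simp
lemma j_divide: "j (u / v) = j u / j v"
  by (simp add: divide_inverse j_mult j_inverse)
lemma j_power: "j (u ^ n) = j u ^ n"
  by (induction n) (simp_all add: j_mult)
lemma j_sum: "j (sum g A) = (\<Sum>a\<in>A. j (g a))"
  by (induction A rule: infinite_finite_induct) (simp_all add: j_add)
lemma j_prod: "j (prod g A) = (\<Prod>a\<in>A. j (g a))"
  by (induction A rule: infinite_finite_induct) (simp_all add: j_mult)
lemma j_eq_0_iff[simp]: "j u = 0 \<longleftrightarrow> u = 0"
proof
  assume "j u = 0"
  show "u = 0"
  proof (rule ccontr)
    assume "u \<noteq> 0"
    hence "j u * j (inverse u) = 1" using j_mult[of u "inverse u"] by simp
    with \<open>j u = 0\<close> show False by simp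
  qed
qed simp
lemma j_inj: "j u = j v \<longleftrightarrow> u = v"
  using j_eq_0_iff[of "u - v"] by (auto simp: j_diff)
lemma j_of_nat: "j (of_nat n) = of_nat n"
  by (induction n) (simp_all add: j_add)
lemma j_numeral: "j (numeral n) = numeral n"
  by (metis of_nat_numeral j_of_nat)

lemmas j_simps = j_add j_mult j_neg j_diff j_inverse j_divide j_power j_sum j_prod j_numeral

lemma range_j_subfield: "is_subfield (range j)"
  unfolding is_subfield_def
  by (auto simp: j_simps[symmetric] simp del: j_eq_0_iff intro: image_eqI[of _ _ 0] image_eqI[of _ _ 1])

definition pe :: "'k poly \<Rightarrow> 'l \<Rightarrow> 'l" where
  "pe p u = poly (map_poly j p) u"

lemma coeff_map_j[simp]: "coeff (map_poly j p) i = j (coeff p i)"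
  by (simp add: coeff_map_poly)

lemma map_j_add: "map_poly j (p + q) = map_poly j p + map_poly j q"
  by (rule map_poly_add_hom) (simp_all add: j_add)
lemma map_j_mult: "map_poly j (p * q) = map_poly j p * map_poly j q"
  by (rule map_poly_mult_hom) (simp_all add: j_add j_mult)

lemma pe_add[simp]: "pe (p + q) u = pe p u + pe q u" by (simp add: pe_def map_j_add)
lemma pe_mult[simp]: "pe (p * q) u = pe p u * pe q u" by (simp add: pe_def map_j_mult)
lemma pe_const[simp]: "pe [:c:] u = j c" by (simp add: pe_def map_poly_const)
lemma pe_0[simp]: "pe 0 u = 0" by (simp add: pe_def)
lemma pe_1[simp]: "pe 1 u = 1" by (simp add: pe_def)
lemma pe_X[simp]: "pe [:0, 1:] u = u" by (simp add: pe_def map_poly_X)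
lemma pe_neg[simp]: "pe (- p) u = - pe p u"
  using pe_add[of p "-p" u] by (metis add.commute eq_neg_iff_add_eq_0 pe_0 add.right_inverse)
lemma pe_diff[simp]: "pe (p - q) u = pe p u - pe q u"
  using pe_add[of p "-q" u] by simp
lemma pe_power[simp]: "pe (p ^ n) u = pe p u ^ n" by (induction n) simp_all
lemma pe_sum: "pe (sum g A) u = (\<Sum>a\<in>A. pe (g a) u)"
  by (induction A rule: infinite_finite_induct) simp_all
lemma pe_monom[simp]: "pe (monom c n) u = j c * u ^ n"
  by (simp add: pe_def map_poly_monom poly_monom)
lemma pe_expand: "degree p \<le> N \<Longrightarrow> pe p u = (\<Sum>i\<le>N. j (coeff p i) * u ^ i)"
  unfolding pe_def
  by (rule poly_sum_bound[THEN trans]) (auto intro: le_trans[OF degree_map_poly_le'])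

definition ev :: "'l \<Rightarrow> 'l \<Rightarrow> 'k poly poly \<Rightarrow> 'l" where
  "ev u v P = poly (map_poly (\<lambda>q. pe q u) P) v"

lemma coeff_map_pe[simp]: "coeff (map_poly (\<lambda>q. pe q u) P) i = pe (coeff P i) u"
  by (simp add: coeff_map_poly)

lemma ev_add[simp]: "ev u v (P + Q) = ev u v P + ev u v Q"
  unfolding ev_def by (subst map_poly_add_hom) simp_all
lemma ev_mult[simp]: "ev u v (P * Q) = ev u v P * ev u v Q"
  unfolding ev_def by (subst map_poly_mult_hom) simp_all
lemma ev_const[simp]: "ev u v [:q:] = pe q u" by (simp add: ev_def map_poly_const)
lemma ev_0[simp]: "ev u v 0 = 0" by (simp add: ev_def)
lemma ev_1[simp]: "ev u v 1 = 1" by (simp add: ev_def)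
lemma ev_Y[simp]: "ev u v [:0, 1:] = v" by (simp add: ev_def map_poly_X)
lemma ev_neg[simp]: "ev u v (- P) = - ev u v P"
  using ev_add[of u v P "-P"] by (metis add.commute eq_neg_iff_add_eq_0 ev_0 add.right_inverse)
lemma ev_diff[simp]: "ev u v (P - Q) = ev u v P - ev u v Q"
  using ev_add[of u v P "-Q"] by simp
lemma ev_power[simp]: "ev u v (P ^ n) = ev u v P ^ n" by (induction n) simp_all
lemma ev_sum: "ev u v (sum g A) = (\<Sum>a\<in>A. ev u v (g a))"
  by (induction A rule: infinite_finite_induct) simp_all
lemma ev_monom[simp]: "ev u v (monom q n) = pe q u * v ^ n"
  by (simp add: ev_def map_poly_monom poly_monom)
lemma ev_expand: "degree P \<le> N \<Longrightarrow> ev u v P = (\<Sum>k\<le>N. pe (coeff P k) u * v ^ k)"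
  unfolding ev_def
  by (rule poly_sum_bound[THEN trans]) (auto intro: le_trans[OF degree_map_poly_le'])

definition indep2 :: "'l \<Rightarrow> 'l \<Rightarrow> bool" where
  "indep2 u v \<longleftrightarrow> (\<forall>P. ev u v P = 0 \<longrightarrow> P = 0)"

end

section \<open>Algebraic independence of pairs\<close>

definition mono2 :: "'a \<Rightarrow> 'a \<Rightarrow> nat \<times> nat \<Rightarrow> 'a \<Rightarrow> nat" where
  "mono2 u v p = (\<lambda>b. if b = u then fst p else if b = v then snd p else 0)"

lemma alg_indep_pair_sum:
  fixes u v :: "'a::field"
  assumes ai: "alg_indep F {u, v}" and uv: "u \<noteq> v" and fin: "finite I"
    and cF: "\<forall>p\<in>I. c p \<in> F"
    and s: "(\<Sum>p\<in>I. c p * (u ^ fst p * v ^ snd p)) = 0"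
  shows "\<forall>p\<in>I. c p = 0"
proof -
  define mo where "mo = mono2 u v"
  have mou: "mo p u = fst p" "mo p v = snd p" for p using uv by (auto simp: mo_def mono2_def)
  have inj: "inj_on mo I"
    by (rule inj_onI) (metis mou prod.collapse)
  define c' where "c' m = c (m u, m v)" for m :: "'a \<Rightarrow> nat"
  have c'mo: "c' (mo p) = c p" for p by (simp add: c'_def mou)
  have pr: "(\<Prod>b\<in>{u, v}. b ^ mo p b) = u ^ fst p * v ^ snd p" for p
    using uv by (simp add: mou)
  have "(\<Sum>m\<in>mo ` I. c' m * (\<Prod>b\<in>{u, v}. b ^ m b)) = (\<Sum>p\<in>I. c p * (u ^ fst p * v ^ snd p))"
    by (subst sum.reindex[OF inj]) (simp add: c'mo pr)
  also have "\<dots> = 0" by (rule s)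
  finally have s': "(\<Sum>m\<in>mo ` I. c' m * (\<Prod>b\<in>{u, v}. b ^ m b)) = 0" .
  have supp: "\<forall>m\<in>mo ` I. \<forall>b. b \<notin> {u, v} \<longrightarrow> m b = 0"
    by (auto simp: mo_def mono2_def)
  have "\<forall>m\<in>mo ` I. c' m = 0"
  proof -
    have "finite (mo ` I)" using fin by simp
    moreover have "\<forall>m\<in>mo ` I. c' m \<in> F" using cF by (auto simp: c'mo)
    ultimately show ?thesis using ai s' supp unfolding alg_indep_def by blast
  qed
  thus ?thesis by (auto simp: c'mo)
qed

context kemb
begin

lemma alg_indep_indep2:
  assumes ai: "alg_indep F {u, v}" and uv: "u \<noteq> v" and jF: "range j \<subseteq> F"
  shows "indep2 u v"
  unfolding indep2_def
proof (intro allI impI)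
  fix P assume e: "ev u v P = 0"
  define N where "N = degree P"
  define D where "D = Max ((\<lambda>k. degree (coeff P k)) ` {..N})"
  have dk: "degree (coeff P k) \<le> D" if "k \<le> N" for k
    unfolding D_def using that by (intro Max_ge) auto
  define c where "c p = j (coeff (coeff P (snd p)) (fst p))" for p
  have "ev u v P = (\<Sum>k\<le>N. pe (coeff P k) u * v ^ k)"
    by (rule ev_expand) (simp add: N_def)
  also have "\<dots> = (\<Sum>k\<le>N. (\<Sum>i\<le>D. j (coeff (coeff P k) i) * u ^ i) * v ^ k)"
    by (intro sum.cong refl) (simp add: pe_expand[OF dk])
  also have "\<dots> = (\<Sum>k\<le>N. \<Sum>i\<le>D. c (i, k) * (u ^ i * v ^ k))"
    by (simp add: sum_distrib_right c_def mult.assoc)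
  also have "\<dots> = (\<Sum>i\<le>D. \<Sum>k\<le>N. c (i, k) * (u ^ i * v ^ k))"
    by (rule sum.swap)
  also have "\<dots> = (\<Sum>p\<in>{..D} \<times> {..N}. c p * (u ^ fst p * v ^ snd p))"
    by (rule sum.cartesian_product[THEN trans]) (simp add: case_prod_unfold)
  finally have "(\<Sum>p\<in>{..D} \<times> {..N}. c p * (u ^ fst p * v ^ snd p)) = 0" using e by simp
  hence z: "\<forall>p\<in>{..D} \<times> {..N}. c p = 0"
    by (intro alg_indep_pair_sum[OF ai uv]) (use jF in \<open>auto simp: c_def\<close>)
  show "P = 0"
  proof (rule poly_eqI)
    fix k
    show "coeff P k = coeff 0 k"
    proof (cases "k \<le> N")
      case True
      show ?thesis
      proof (simp, rule poly_eqI)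
        fix i
        show "coeff (coeff P k) i = coeff 0 i"
        proof (cases "i \<le> D")
          case True
          with z \<open>k \<le> N\<close> show ?thesis by (auto simp: c_def)
        next
          case False
          thus ?thesis using dk[OF \<open>k \<le> N\<close>] by (simp add: coeff_eq_0)
        qed
      qed
    next
      case False thus ?thesis by (simp add: coeff_eq_0 N_def)
    qed
  qed
qed

end

context kemb begin

lemma indep2_alg_indep:
  assumes ind: "indep2 u v" and uv: "u \<noteq> v"
  shows "alg_indep (range j) {u, v}"
  unfolding alg_indep_def
proof (intro conjI allI impI)
  show "finite {u, v}" by simp
  fix M :: "('l \<Rightarrow> nat) set" and c
  assume H: "finite M \<and> (\<forall>m\<in>M. \<forall>b. b \<notin> {u, v} \<longrightarrow> m b = 0) \<and> (\<forall>m\<in>M. c m \<in> range j) \<and>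
      (\<Sum>m\<in>M. c m * (\<Prod>b\<in>{u, v}. b ^ m b)) = 0"
  hence fin: "finite M" and supp: "\<forall>m\<in>M. \<forall>b. b \<notin> {u, v} \<longrightarrow> m b = 0"
    and cj: "\<forall>m\<in>M. c m \<in> range j" and s: "(\<Sum>m\<in>M. c m * (\<Prod>b\<in>{u, v}. b ^ m b)) = 0"
    by auto
  define h where "h m = inv j (c m)" for m
  have hj: "j (h m) = c m" if "m \<in> M" for m
    using cj that unfolding h_def by (simp add: f_inv_into_f)
  define P where "P = (\<Sum>m\<in>M. monom (monom (h m) (m u)) (m v))"
  have "ev u v P = (\<Sum>m\<in>M. c m * (\<Prod>b\<in>{u, v}. b ^ m b))"
    unfolding P_def ev_sum using uv by (intro sum.cong refl) (simp add: hj mult.assoc)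
  hence "ev u v P = 0" using s by simp
  hence P0: "P = 0" using ind unfolding indep2_def by blast
  show "\<forall>m\<in>M. c m = 0"
  proof
    fix m0 assume m0: "m0 \<in> M"
    have eq: "(m v = m0 v \<and> m u = m0 u) \<longleftrightarrow> m = m0" if "m \<in> M" for m
    proof
      assume a: "m v = m0 v \<and> m u = m0 u"
      show "m = m0"
      proof
        fix b show "m b = m0 b"
        proof (cases "b = u \<or> b = v")
          case True thus ?thesis using a by auto
        next
          case False
          have "m b = 0" using supp that False by blast
          moreover have "m0 b = 0" using supp m0 False by blast
          ultimately show ?thesis by simp
        qed
      qed
    qed simp
    have "coeff (coeff P (m0 v)) (m0 u) = (\<Sum>m\<in>M. if m v = m0 v \<and> m u = m0 u then h m else 0)"
      unfolding P_def coeff_sum by (intro sum.cong refl) (auto simp: coeff_monom)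
    also have "\<dots> = (\<Sum>m\<in>M. if m = m0 then h m else 0)"
      by (intro sum.cong refl) (simp add: eq)
    also have "\<dots> = h m0" using fin m0 by simp
    finally have "h m0 = 0" using P0 by simp
    thus "c m0 = 0" using hj[OF m0] by simp
  qed
qed

definition FR :: "'l \<Rightarrow> 'l \<Rightarrow> 'l set" where
  "FR u v = {ev u v P / ev u v Q | P Q. True}"

lemma FR_I: "ev u v P / ev u v Q \<in> FR u v"
  unfolding FR_def by blast

lemma FR_subfield: "is_subfield (FR u v)"
  unfolding is_subfield_def
proof (intro conjI ballI)
  show "0 \<in> FR u v" using FR_I[of u v 0 1] by simp
  show "1 \<in> FR u v" using FR_I[of u v 1 1] by simp
  fix a b assume a: "a \<in> FR u v" and b: "b \<in> FR u v"
  then obtain P Q P' Q' where ab: "a = ev u v P / ev u v Q" "b = ev u v P' / ev u v Q'"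
    unfolding FR_def by auto
  show "a * b \<in> FR u v" using FR_I[of u v "P * P'" "Q * Q'"] ab by simp
  show "a + b \<in> FR u v"
  proof (cases "ev u v Q = 0 \<or> ev u v Q' = 0")
    case True thus ?thesis using a b ab by auto
  next
    case False
    hence "a + b = ev u v (P * Q' + P' * Q) / ev u v (Q * Q')"
      using ab by (simp add: add_frac_eq)
    thus ?thesis using FR_I[of u v "P * Q' + P' * Q" "Q * Q'"] by simp
  qed
next
  fix a assume "a \<in> FR u v"
  then obtain P Q where ab: "a = ev u v P / ev u v Q" unfolding FR_def by auto
  show "- a \<in> FR u v" using FR_I[of u v "- P" Q] ab by simp
  show "inverse a \<in> FR u v" using FR_I[of u v Q P] ab by simp
qed

lemma ev_in_subfield:
  assumes S: "is_subfield S" and sub: "range j \<subseteq> S" "u \<in> S" "v \<in> S"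
  shows "ev u v P \<in> S"
proof -
  have pe_in: "pe p u \<in> S" for p
    using pe_expand[of p "degree p" u] sub
    by (auto intro!: sf_sum[OF S] sf_mult[OF S] sf_power[OF S])
  show ?thesis
    using ev_expand[of P "degree P" u v] sub pe_in
    by (auto intro!: sf_sum[OF S] sf_mult[OF S] sf_power[OF S])
qed

lemma FR_gen: "gen_field (range j \<union> {u, v}) = FR u v"
proof
  show "gen_field (range j \<union> {u, v}) \<subseteq> FR u v"
  proof (rule gen_field_min[OF FR_subfield], safe)
    fix c show "j c \<in> FR u v" using FR_I[of u v "[:[:c:]:]" 1] by simp
  next
    show "u \<in> FR u v" using FR_I[of u v "[:[:0, 1:]:]" 1] by simp
  next
    show "v \<in> FR u v" using FR_I[of u v "[:0, 1:]" 1] by simp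
  qed
  show "FR u v \<subseteq> gen_field (range j \<union> {u, v})"
  proof
    fix e assume "e \<in> FR u v"
    then obtain P Q where e: "e = ev u v P / ev u v Q" unfolding FR_def by auto
    have S: "is_subfield (gen_field (range j \<union> {u, v}))" by (rule gen_field_is_subfield)
    have sub: "range j \<subseteq> gen_field (range j \<union> {u, v})" "u \<in> gen_field (range j \<union> {u, v})"
      "v \<in> gen_field (range j \<union> {u, v})" using gen_field_incl[of "range j \<union> {u, v}"] by blast+
    show "e \<in> gen_field (range j \<union> {u, v})"
      unfolding e by (intro sf_div[OF S] ev_in_subfield[OF S sub])
  qed
qed

lemma FR_rep:
  assumes "e \<in> FR u v"
  shows "\<exists>P Q. Q \<noteq> 0 \<and> e = ev u v P / ev u v Q"
proof -
  obtain P Q where e: "e = ev u v P / ev u v Q" using assms unfolding FR_def by auto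
  show ?thesis
  proof (cases "Q = 0")
    case True thus ?thesis using e by (intro exI[of _ 0] exI[of _ 1]) simp
  qed (use e in auto)
qed

lemma indep2_ev_nz: "indep2 u v \<Longrightarrow> Q \<noteq> 0 \<Longrightarrow> ev u v Q \<noteq> 0"
  unfolding indep2_def by blast

lemma frac_eq:
  assumes "indep2 u v" "Q \<noteq> 0" "Q' \<noteq> 0"
  shows "(ev u v P / ev u v Q = ev u v P' / ev u v Q') \<longleftrightarrow> P * Q' = P' * Q"
proof -
  have nz: "ev u v Q \<noteq> 0" "ev u v Q' \<noteq> 0" using assms indep2_ev_nz by auto
  have "(ev u v P / ev u v Q = ev u v P' / ev u v Q') \<longleftrightarrow> ev u v (P * Q' - P' * Q) = 0"
    using nz by (simp add: field_simps)
  also have "\<dots> \<longleftrightarrow> P * Q' - P' * Q = 0"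
    using assms(1) unfolding indep2_def by (metis ev_0)
  finally show ?thesis by simp
qed

end

section \<open>Quadratic extensions\<close>

definition qext :: "'a::field set \<Rightarrow> 'a \<Rightarrow> 'a set" where
  "qext E z = {p + z * q | p q. p \<in> E \<and> q \<in> E}"

lemma qext_I: "p \<in> E \<Longrightarrow> q \<in> E \<Longrightarrow> p + z * q \<in> qext E z"
  unfolding qext_def by blast

lemma qext_unique:
  assumes S: "is_subfield E" and z: "z \<notin> E" and pin: "p \<in> E" "q \<in> E" "p' \<in> E" "q' \<in> E"
    and eq: "p + z * q = p' + z * q'"
  shows "p = p' \<and> q = q'"
proof (cases "q = q'")
  case True thus ?thesis using eq by simp
next
  case False
  hence "z = (p' - p) / (q - q')" using eq by (simp add: field_simps)
  hence "z \<in> E" using pin by (simp add: sf_div[OF S] sf_diff[OF S])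
  thus ?thesis using z by simp
qed

lemma qext_subfield:
  assumes S: "is_subfield E" and zz: "z * z \<in> E"
  shows "is_subfield (qext E z)"
proof (cases "z \<in> E")
  case True
  have "qext E z = E"
  proof
    show "qext E z \<subseteq> E" unfolding qext_def using True by (auto intro: sf_add[OF S] sf_mult[OF S])
    show "E \<subseteq> qext E z" using qext_I[of _ E 0 z] sf_0[OF S] by force
  qed
  thus ?thesis using S by simp
next
  case False
  note add = sf_add[OF S] and mult = sf_mult[OF S] and neg = sf_neg[OF S] and dv = sf_div[OF S]
  have N: "p * p - z * z * (q * q) \<noteq> 0" if "p \<in> E" "q \<in> E" "p \<noteq> 0 \<or> q \<noteq> 0" for p q
  proof
    assume h: "p * p - z * z * (q * q) = 0"
    show False
    proof (cases "q = 0")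
      case True thus False using h that by simp
    next
      case False
      have "(p / q) * (p / q) = z * z" using h False by (simp add: field_simps)
      hence "(p / q - z) * (p / q + z) = 0" by (simp add: algebra_simps)
      hence "z = p / q \<or> z = - (p / q)" by (auto simp: eq_neg_iff_add_eq_0 add.commute)
      moreover have "p / q \<in> E" "- (p / q) \<in> E" using that by (auto intro: dv neg)
      ultimately show False using \<open>z \<notin> E\<close> by auto
    qed
  qed
  show ?thesis
    unfolding is_subfield_def
  proof (intro conjI ballI)
    show "0 \<in> qext E z" using qext_I[of 0 E 0 z] sf_0[OF S] by simp
    show "1 \<in> qext E z" using qext_I[of 1 E 0 z] sf_0[OF S] sf_1[OF S] by simp
    fix a b assume "a \<in> qext E z" "b \<in> qext E z"
    then obtain p q p' q' where pq: "p \<in> E" "q \<in> E" "p' \<in> E" "q' \<in> E" "a = p + z * q" "b = p' + z * q'"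
      unfolding qext_def by auto
    have "a + b = (p + p') + z * (q + q')" using pq by (simp add: algebra_simps)
    thus "a + b \<in> qext E z" using qext_I[of "p + p'" E "q + q'" z] add pq by metis
    have "a * b = (p * p' + (z * z) * (q * q')) + z * (p * q' + q * p')" using pq by (simp add: algebra_simps)
    moreover have "p * p' + (z * z) * (q * q') \<in> E" "p * q' + q * p' \<in> E"
      using pq zz by (auto intro!: add mult)
    ultimately show "a * b \<in> qext E z" using qext_I by metis
  next
    fix a assume "a \<in> qext E z"
    then obtain p q where pq: "p \<in> E" "q \<in> E" "a = p + z * q" unfolding qext_def by auto
    have "- a = (- p) + z * (- q)" using pq by simp
    thus "- a \<in> qext E z" using qext_I[of "-p" E "-q" z] pq neg by metis
    show "inverse a \<in> qext E z"
    proof (cases "p = 0 \<and> q = 0")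
      case True thus ?thesis using pq qext_I[of 0 E 0 z] sf_0[OF S] by simp
    next
      case False
      define n where "n = p * p - z * z * (q * q)"
      have n0: "n \<noteq> 0" using N[OF pq(1,2)] False by (simp add: n_def)
      have nE: "n \<in> E" unfolding n_def
        by (rule sf_diff[OF S], rule mult[OF pq(1,1)], rule mult[OF zz mult[OF pq(2,2)]])
      have an: "a * (p - z * q) = n" unfolding n_def pq(3) by (simp add: algebra_simps)
      hence a0: "a \<noteq> 0" using n0 by auto
      have "inverse a = (p - z * q) / n" using an a0 n0 by (auto simp: field_simps)
      also have "\<dots> = p / n + z * (- q / n)" by (simp add: diff_divide_distrib)
      finally have "inverse a = p / n + z * (- q / n)" .
      moreover have "p / n \<in> E" "- q / n \<in> E" using pq nE by (auto intro!: dv neg)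
      ultimately show ?thesis using qext_I by metis
    qed
  qed
qed

lemma qext_min: "is_subfield S \<Longrightarrow> E \<subseteq> S \<Longrightarrow> z \<in> S \<Longrightarrow> qext E z \<subseteq> S"
  unfolding qext_def by (auto intro: sf_add sf_mult)

lemma qext_base: "is_subfield E \<Longrightarrow> E \<subseteq> qext E z"
  using qext_I[of _ E 0 z] sf_0 by force

lemma qext_z: "is_subfield E \<Longrightarrow> z \<in> qext E z"
  using qext_I[of 0 E 1 z] sf_0 sf_1 by force

lemma qext_alg:
  assumes S: "is_subfield E" and zz: "z * z \<in> E" and e: "e \<in> qext E z"
  shows "algebraic_over E e"
proof -
  obtain p q where pq: "p \<in> E" "q \<in> E" "e = p + z * q" using e unfolding qext_def by auto
  define P where "P = [: p * p - z * z * (q * q), - (p + p), 1 :]"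
  have "P \<noteq> 0" unfolding P_def by simp
  moreover have "\<forall>i. coeff P i \<in> E"
  proof
    fix i
    have h1: "p * p - z * z * (q * q) \<in> E" using pq zz by (auto intro!: sf_diff[OF S] sf_mult[OF S])
    have h2: "- (p + p) \<in> E" by (rule sf_neg[OF S], rule sf_add[OF S]) (use pq in auto)
    show "coeff P i \<in> E" unfolding P_def using sf_1[OF S] sf_0[OF S] h1 h2
      by (cases i; cases "i - 1"; cases "i - 2") (auto simp: coeff_pCons split: nat.split)
  qed
  moreover have "poly P e = 0" unfolding P_def pq(3) by (simp add: algebra_simps)
  ultimately show ?thesis unfolding algebraic_over_def by blast
qed

context kemb begin

lemma ev_pCons[simp]: "ev u v (pCons q P) = pe q u + v * ev u v P"
  by (simp add: ev_def map_poly_pCons)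

lemma pe_smult[simp]: "pe (smult c p) u = j c * pe p u"
proof -
  have "smult c p = [:c:] * p" by simp
  thus ?thesis by (metis pe_mult pe_const)
qed

lemma ev_smult[simp]: "ev u v (smult q P) = pe q u * ev u v P"
proof -
  have "smult q P = [:q:] * P" by simp
  thus ?thesis by (metis ev_mult ev_const)
qed

lemma ev_2[simp]: "ev u v 2 = 2" by (metis ev_1 ev_add one_add_one)

lemma notin_FR:
  assumes ind: "indep2 u v" and nsq: "\<forall>b. b * b \<noteq> a"
    and rel: "j a * z ^ 2 = v ^ 2 - pe f u"
  shows "z \<notin> FR u v"
proof
  assume "z \<in> FR u v"
  then obtain P Q where Q0: "Q \<noteq> 0" and z: "z = ev u v P / ev u v Q" using FR_rep by blast
  have eQ: "ev u v Q \<noteq> 0" using indep2_ev_nz[OF ind Q0] .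
  define G where "G = [: - f, 0, 1 :]"
  have eG: "ev u v G = v ^ 2 - pe f u" by (simp add: G_def power2_eq_square)
  have r': "j a * (ev u v P / ev u v Q) ^ 2 = v ^ 2 - pe f u" using rel z by simp
  have "j a * ev u v P ^ 2 = (v ^ 2 - pe f u) * ev u v Q ^ 2"
    using r' eQ by (simp add: field_simps)
  hence "ev u v ([:[:a:]:] * P ^ 2) = ev u v (G * Q ^ 2)"
    by (simp only: ev_mult eG ev_power ev_const pe_const)
  hence "ev u v ([:[:a:]:] * P ^ 2 - G * Q ^ 2) = 0" by simp
  hence "[:[:a:]:] * P ^ 2 - G * Q ^ 2 = 0" using ind unfolding indep2_def by blast
  hence eq: "[:[:a:]:] * P ^ 2 = G * Q ^ 2" by simp
  have lG: "lead_coeff G = 1" by (simp add: G_def)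
  have "lead_coeff ([:[:a:]:] * P ^ 2) = lead_coeff (G * Q ^ 2)" using eq by simp
  have a0: "a \<noteq> 0" using nsq by (metis mult_zero_left)
  hence eq2: "smult a (lead_coeff P ^ 2) = lead_coeff Q ^ 2"
    using \<open>lead_coeff ([:[:a:]:] * P ^ 2) = lead_coeff (G * Q ^ 2)\<close>
    by (simp add: lead_coeff_mult lead_coeff_power lG)
  have "lead_coeff (smult a (lead_coeff P ^ 2)) = lead_coeff (lead_coeff Q ^ 2)" using eq2 by simp
  hence eq3: "a * lead_coeff (lead_coeff P) ^ 2 = lead_coeff (lead_coeff Q) ^ 2"
    by (simp add: lead_coeff_power a0)
  have "P \<noteq> 0"
  proof
    assume "P = 0"
    hence "G * Q ^ 2 = 0" using eq by simp
    moreover have "G \<noteq> 0" by (simp add: G_def)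
    ultimately show False using Q0 by simp
  qed
  hence n0: "lead_coeff (lead_coeff P) \<noteq> 0" by simp
  have "(lead_coeff (lead_coeff Q) / lead_coeff (lead_coeff P)) *
        (lead_coeff (lead_coeff Q) / lead_coeff (lead_coeff P)) = a"
    using eq3 n0 by (simp add: field_simps power2_eq_square)
  thus False using nsq by blast
qed

lemma indep2_T:
  assumes ind: "indep2 u v" and rel: "2 * v * t = v ^ 2 + pe f u"
  shows "indep2 u t"
  unfolding indep2_def
proof (intro allI impI, rule ccontr)
  fix Q assume eQ: "ev u t Q = 0" and Q0: "Q \<noteq> 0"
  define d where "d = degree Q"
  define A :: "'k poly poly" where "A = [: f, 0, 1 :]"
  define B :: "'k poly poly" where "B = 2 * [:0, 1:]"
  define Tm where "Tm i = [:coeff Q i:] * A ^ i * B ^ (d - i)" for i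
  define P where "P = (\<Sum>i\<le>d. Tm i)"
  have "ev u v A = v ^ 2 + pe f u" by (simp add: A_def power2_eq_square)
  hence eA: "ev u v A = 2 * v * t" using rel by simp
  have eB: "ev u v B = 2 * v" by (simp add: B_def)
  have "ev u v P = (\<Sum>i\<le>d. pe (coeff Q i) u * ((2 * v) ^ d * t ^ i))"
    unfolding P_def ev_sum
  proof (intro sum.cong refl)
    fix i assume "i \<in> {..d}"
    hence "(2 * v * t) ^ i * (2 * v) ^ (d - i) = (2 * v) ^ d * t ^ i"
      by (simp add: power_mult_distrib power_add[symmetric] algebra_simps)
    thus "ev u v (Tm i) = pe (coeff Q i) u * ((2 * v) ^ d * t ^ i)"
      by (simp add: Tm_def eA eB mult.assoc)
  qed
  also have "\<dots> = (2 * v) ^ d * ev u t Q"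
    by (simp add: ev_expand[of Q d] d_def sum_distrib_left algebra_simps)
  finally have "ev u v P = 0" using eQ by simp
  hence P0: "P = 0" using ind unfolding indep2_def by blast
  have degA: "degree A = 2" by (simp add: A_def)
  have lA: "lead_coeff A = 1" by (simp add: A_def)
  have degB: "degree B \<le> Suc 0" unfolding B_def
    by (rule order.trans[OF degree_mult_le]) simp
  have c1: "coeff (Tm i) (2 * d) = 0" if "i < d" for i
    unfolding Tm_def
  proof (rule coeff_eq_0)
    have "degree ([:coeff Q i:] * A ^ i * B ^ (d - i)) \<le> degree ([:coeff Q i:] * A ^ i) + degree (B ^ (d - i))"
      by (rule degree_mult_le)
    also have "\<dots> \<le> (degree [:coeff Q i:] + degree (A ^ i)) + degree (B ^ (d - i))"
      by (intro add_mono degree_mult_le order.refl)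
    also have "\<dots> \<le> (0 + i * 2) + (d - i) * 1"
      by (intro add_mono degree_power_le[THEN order.trans]) (auto intro: mult_le_mono simp: degA degB)
    also have "\<dots> < 2 * d" using that by simp
    finally show "degree ([:coeff Q i:] * A ^ i * B ^ (d - i)) < 2 * d" .
  qed
  have c2: "coeff (Tm d) (2 * d) = coeff Q d"
  proof -
    have "degree (A ^ d) = 2 * d" by (simp add: degree_power_eq degA A_def)
    hence "coeff (A ^ d) (2 * d) = 1" using lA by (metis lead_coeff_power power_one)
    thus ?thesis by (simp add: Tm_def)
  qed
  have "coeff P (2 * d) = (\<Sum>i\<le>d. coeff (Tm i) (2 * d))"
    unfolding P_def coeff_sum ..
  also have "\<dots> = (\<Sum>i\<le>d. if i = d then coeff Q d else 0)"
    by (intro sum.cong refl) (auto simp: c1 c2 le_less)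
  also have "\<dots> = coeff Q d" by simp
  finally have "coeff Q d = 0" using P0 by simp
  thus False using Q0 d_def by simp
qed

end

section \<open>Isomorphisms\<close>

locale two_emb = J: kemb j + I: kemb i
  for j :: "'k::field \<Rightarrow> 'l::field" and i :: "'k \<Rightarrow> 'o::field"
begin

definition phi :: "'l \<Rightarrow> 'l \<Rightarrow> 'o \<Rightarrow> 'o \<Rightarrow> 'l \<Rightarrow> 'o" where
  "phi u1 v1 u2 v2 e = (let PQ = (SOME PQ. snd PQ \<noteq> 0 \<and> e = J.ev u1 v1 (fst PQ) / J.ev u1 v1 (snd PQ))
     in I.ev u2 v2 (fst PQ) / I.ev u2 v2 (snd PQ))"

context
  fixes u1 v1 :: 'l and u2 v2 :: 'o
  assumes i1: "J.indep2 u1 v1" and i2: "I.indep2 u2 v2"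
begin

lemma phi_frac:
  assumes Q0: "Q \<noteq> 0"
  shows "phi u1 v1 u2 v2 (J.ev u1 v1 P / J.ev u1 v1 Q) = I.ev u2 v2 P / I.ev u2 v2 Q"
proof -
  let ?e = "J.ev u1 v1 P / J.ev u1 v1 Q"
  define PQ where "PQ = (SOME PQ. snd PQ \<noteq> 0 \<and> ?e = J.ev u1 v1 (fst PQ) / J.ev u1 v1 (snd PQ))"
  have "snd PQ \<noteq> 0 \<and> ?e = J.ev u1 v1 (fst PQ) / J.ev u1 v1 (snd PQ)"
    unfolding PQ_def by (rule someI[of _ "(P, Q)"]) (simp add: Q0)
  hence s: "snd PQ \<noteq> 0" and e: "?e = J.ev u1 v1 (fst PQ) / J.ev u1 v1 (snd PQ)" by auto
  have "P * snd PQ = fst PQ * Q" using e J.frac_eq[OF i1 Q0 s] by simp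
  hence "I.ev u2 v2 P / I.ev u2 v2 Q = I.ev u2 v2 (fst PQ) / I.ev u2 v2 (snd PQ)"
    using I.frac_eq[OF i2 Q0 s] by simp
  thus ?thesis unfolding phi_def PQ_def[symmetric] Let_def by simp
qed

lemma phi_iso:
  "bij_betw (phi u1 v1 u2 v2) (J.FR u1 v1) (I.FR u2 v2) \<and>
   (\<forall>a\<in>J.FR u1 v1. \<forall>b\<in>J.FR u1 v1. phi u1 v1 u2 v2 (a + b) = phi u1 v1 u2 v2 a + phi u1 v1 u2 v2 b \<and>
      phi u1 v1 u2 v2 (a * b) = phi u1 v1 u2 v2 a * phi u1 v1 u2 v2 b)"
proof (intro conjI ballI)
  let ?f = "phi u1 v1 u2 v2"
  show "bij_betw ?f (J.FR u1 v1) (I.FR u2 v2)"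
    unfolding bij_betw_def
  proof (intro conjI)
    show "inj_on ?f (J.FR u1 v1)"
    proof (rule inj_onI)
      fix a b assume a: "a \<in> J.FR u1 v1" and b: "b \<in> J.FR u1 v1" and eq: "?f a = ?f b"
      obtain P Q where PQ: "Q \<noteq> 0" "a = J.ev u1 v1 P / J.ev u1 v1 Q" using J.FR_rep[OF a] by blast
      obtain P' Q' where PQ': "Q' \<noteq> 0" "b = J.ev u1 v1 P' / J.ev u1 v1 Q'" using J.FR_rep[OF b] by blast
      have "I.ev u2 v2 P / I.ev u2 v2 Q = I.ev u2 v2 P' / I.ev u2 v2 Q'"
        using eq PQ PQ' phi_frac by simp
      hence "P * Q' = P' * Q" using I.frac_eq[OF i2 PQ(1) PQ'(1)] by simp
      thus "a = b" using J.frac_eq[OF i1 PQ(1) PQ'(1)] PQ PQ' by simp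
    qed
    show "?f ` J.FR u1 v1 = I.FR u2 v2"
    proof
      show "?f ` J.FR u1 v1 \<subseteq> I.FR u2 v2"
      proof
        fix e assume "e \<in> ?f ` J.FR u1 v1"
        then obtain a where a: "a \<in> J.FR u1 v1" "e = ?f a" by auto
        obtain P Q where PQ: "Q \<noteq> 0" "a = J.ev u1 v1 P / J.ev u1 v1 Q" using J.FR_rep[OF a(1)] by blast
        show "e \<in> I.FR u2 v2" using a PQ phi_frac I.FR_I by simp
      qed
      show "I.FR u2 v2 \<subseteq> ?f ` J.FR u1 v1"
      proof
        fix e assume "e \<in> I.FR u2 v2"
        then obtain P Q where PQ: "Q \<noteq> 0" "e = I.ev u2 v2 P / I.ev u2 v2 Q" using I.FR_rep by blast
        have "e = ?f (J.ev u1 v1 P / J.ev u1 v1 Q)" using PQ phi_frac by simp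
        thus "e \<in> ?f ` J.FR u1 v1" using J.FR_I by blast
      qed
    qed
  qed
next
  let ?f = "phi u1 v1 u2 v2"
  fix a b assume a: "a \<in> J.FR u1 v1" and b: "b \<in> J.FR u1 v1"
  obtain P Q where PQ: "Q \<noteq> 0" "a = J.ev u1 v1 P / J.ev u1 v1 Q" using J.FR_rep[OF a] by blast
  obtain P' Q' where PQ': "Q' \<noteq> 0" "b = J.ev u1 v1 P' / J.ev u1 v1 Q'" using J.FR_rep[OF b] by blast
  have n1: "J.ev u1 v1 Q \<noteq> 0" "J.ev u1 v1 Q' \<noteq> 0" using J.indep2_ev_nz[OF i1] PQ PQ' by auto
  have n2: "I.ev u2 v2 Q \<noteq> 0" "I.ev u2 v2 Q' \<noteq> 0" using I.indep2_ev_nz[OF i2] PQ PQ' by auto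
  have QQ: "Q * Q' \<noteq> 0" using PQ PQ' by simp
  have ab: "a + b = J.ev u1 v1 (P * Q' + P' * Q) / J.ev u1 v1 (Q * Q')"
    using PQ PQ' n1 by (simp add: add_frac_eq)
  have "?f (a + b) = I.ev u2 v2 (P * Q' + P' * Q) / I.ev u2 v2 (Q * Q')"
    unfolding ab by (rule phi_frac[OF QQ])
  also have "\<dots> = ?f a + ?f b"
    using PQ PQ' phi_frac n2 by (simp add: add_frac_eq)
  finally show "?f (a + b) = ?f a + ?f b" .
  have ab2: "a * b = J.ev u1 v1 (P * P') / J.ev u1 v1 (Q * Q')"
    using PQ PQ' by simp
  have "?f (a * b) = I.ev u2 v2 (P * P') / I.ev u2 v2 (Q * Q')"
    unfolding ab2 by (rule phi_frac[OF QQ])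
  also have "\<dots> = ?f a * ?f b"
    using PQ PQ' phi_frac by simp
  finally show "?f (a * b) = ?f a * ?f b" .
qed

end
end

section \<open>Extension of isomorphisms to quadratic extensions\<close>

lemma qext_iso:
  fixes \<phi> :: "'a::field \<Rightarrow> 'b::field"
  assumes S0: "is_subfield E0" and S: "is_subfield E"
    and bij: "bij_betw \<phi> E0 E"
    and hom: "\<forall>a\<in>E0. \<forall>b\<in>E0. \<phi> (a + b) = \<phi> a + \<phi> b \<and> \<phi> (a * b) = \<phi> a * \<phi> b"
    and t: "t \<notin> E0" "t * t \<in> E0" and T: "T \<notin> E" "T * T = \<phi> (t * t)"
  shows "\<exists>\<psi>. bij_betw \<psi> (qext E0 t) (qext E T) \<and>
     (\<forall>a\<in>qext E0 t. \<forall>b\<in>qext E0 t. \<psi> (a + b) = \<psi> a + \<psi> b \<and> \<psi> (a * b) = \<psi> a * \<psi> b) \<and>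
     (\<forall>a\<in>E0. \<psi> a = \<phi> a)"
proof -
  have into: "\<phi> a \<in> E" if "a \<in> E0" for a using bij that unfolding bij_betw_def by auto
  have phi0: "\<phi> 0 = 0"
  proof -
    have "\<phi> (0 + 0) = \<phi> 0 + \<phi> 0" using hom sf_0[OF S0] by blast
    thus ?thesis by (metis add_cancel_right_right add_0)
  qed
  define rep where "rep e = (SOME pq. fst pq \<in> E0 \<and> snd pq \<in> E0 \<and> e = fst pq + t * snd pq)" for e
  define \<psi> where "\<psi> e = \<phi> (fst (rep e)) + T * \<phi> (snd (rep e))" for e
  have psi: "\<psi> (p + t * q) = \<phi> p + T * \<phi> q" if "p \<in> E0" "q \<in> E0" for p q
  proof -
    have "fst (rep (p + t * q)) \<in> E0 \<and> snd (rep (p + t * q)) \<in> E0 \<and>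
          p + t * q = fst (rep (p + t * q)) + t * snd (rep (p + t * q))"
      unfolding rep_def by (rule someI[of _ "(p, q)"]) (simp add: that)
    hence "fst (rep (p + t * q)) = p \<and> snd (rep (p + t * q)) = q"
      using qext_unique[OF S0 t(1)] that by metis
    thus ?thesis unfolding \<psi>_def by simp
  qed
  have hom': "\<psi> (a + b) = \<psi> a + \<psi> b \<and> \<psi> (a * b) = \<psi> a * \<psi> b" if ha: "a \<in> qext E0 t" and hb: "b \<in> qext E0 t" for a b
  proof -
    obtain p q where "p \<in> E0" "q \<in> E0" "a = p + t * q" using ha unfolding qext_def by blast
    moreover obtain p' q' where "p' \<in> E0" "q' \<in> E0" "b = p' + t * q'" using hb unfolding qext_def by blast
    ultimately have pq: "p \<in> E0" "q \<in> E0" "p' \<in> E0" "q' \<in> E0" "a = p + t * q" "b = p' + t * q'"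
      by auto
    have pa: "\<psi> a = \<phi> p + T * \<phi> q" unfolding pq(5) by (rule psi) (use pq in auto)
    have pb: "\<psi> b = \<phi> p' + T * \<phi> q'" unfolding pq(6) by (rule psi) (use pq in auto)
    have e1: "a + b = (p + p') + t * (q + q')" using pq by (simp add: algebra_simps)
    have "\<psi> (a + b) = \<phi> (p + p') + T * \<phi> (q + q')"
      unfolding e1 by (rule psi) (use pq sf_add[OF S0] in auto)
    also have "\<dots> = (\<phi> p + T * \<phi> q) + (\<phi> p' + T * \<phi> q')" using pq(1-4) hom by (simp add: algebra_simps)
    also have "\<dots> = \<psi> a + \<psi> b" by (simp only: pa pb)
    finally have 1: "\<psi> (a + b) = \<psi> a + \<psi> b" .
    have e2: "a * b = (p * p' + (t * t) * (q * q')) + t * (p * q' + q * p')" using pq by (simp add: algebra_simps)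
    have m: "p * p' \<in> E0" "(t * t) * (q * q') \<in> E0" "p * q' \<in> E0" "q * p' \<in> E0" "q * q' \<in> E0"
      using pq t by (auto intro!: sf_mult[OF S0])
    have "\<psi> (a * b) = \<phi> (p * p' + (t * t) * (q * q')) + T * \<phi> (p * q' + q * p')"
      unfolding e2 by (rule psi) (use m sf_add[OF S0] in auto)
    also have "\<dots> = (\<phi> p * \<phi> p' + \<phi> (t * t) * (\<phi> q * \<phi> q')) + T * (\<phi> p * \<phi> q' + \<phi> q * \<phi> p')"
      using pq(1-4) hom t m by simp
    also have "\<dots> = (\<phi> p + T * \<phi> q) * (\<phi> p' + T * \<phi> q')" using T by (simp add: algebra_simps)
    also have "\<dots> = \<psi> a * \<psi> b" by (simp only: pa pb)
    finally show ?thesis using 1 by simp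
  qed
  have base: "\<psi> a = \<phi> a" if "a \<in> E0" for a
    using psi[OF that sf_0[OF S0]] phi0 by simp
  have bij': "bij_betw \<psi> (qext E0 t) (qext E T)"
    unfolding bij_betw_def
  proof (intro conjI)
    show "inj_on \<psi> (qext E0 t)"
    proof (rule inj_onI)
      fix a b assume "a \<in> qext E0 t" "b \<in> qext E0 t" and eq: "\<psi> a = \<psi> b"
      then obtain p q p' q' where pq: "p \<in> E0" "q \<in> E0" "p' \<in> E0" "q' \<in> E0" "a = p + t * q" "b = p' + t * q'"
        unfolding qext_def by auto
      have "\<phi> p + T * \<phi> q = \<phi> p' + T * \<phi> q'" using eq pq psi by simp
      hence "\<phi> p = \<phi> p' \<and> \<phi> q = \<phi> q'" using qext_unique[OF S T(1)] into pq by blast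
      hence "p = p' \<and> q = q'" using bij pq unfolding bij_betw_def inj_on_def by blast
      thus "a = b" using pq by simp
    qed
    show "\<psi> ` qext E0 t = qext E T"
    proof
      show "\<psi> ` qext E0 t \<subseteq> qext E T"
        unfolding qext_def using psi into by blast
      show "qext E T \<subseteq> \<psi> ` qext E0 t"
      proof
        fix e assume "e \<in> qext E T"
        then obtain P Q where PQ: "P \<in> E" "Q \<in> E" "e = P + T * Q" unfolding qext_def by auto
        obtain p where p: "p \<in> E0" "P = \<phi> p" using bij PQ(1) unfolding bij_betw_def by auto
        obtain q where q: "q \<in> E0" "Q = \<phi> q" using bij PQ(2) unfolding bij_betw_def by auto
        have "e = \<psi> (p + t * q)" using PQ p q psi by simp
        moreover have "p + t * q \<in> qext E0 t" using p q qext_I by blast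
        ultimately show "e \<in> \<psi> ` qext E0 t" by blast
      qed
    qed
  qed
  show ?thesis using bij' hom' base by blast
qed

context kemb begin

sublocale vs: vector_space "\<lambda>c v. j c * v"
  by unfold_locales (simp_all add: j_add j_mult algebra_simps)

lemma span_mult_lin:
  assumes x: "x \<in> vs.span A" and h: "\<And>s. s \<in> A \<Longrightarrow> c * s \<in> vs.span B"
  shows "c * x \<in> vs.span B"
  using x
proof (induction rule: vs.span_induct_alt)
  case base thus ?case by (simp add: vs.span_zero)
next
  case (step a s y)
  have "c * (j a * s + y) = j a * (c * s) + c * y" by (simp add: algebra_simps)
  thus ?case using h[OF step(1)] step(2) by (simp add: vs.span_add vs.span_scale)
qed

lemma count_dep:
  fixes S V :: "nat \<Rightarrow> 'l set" and C K d :: nat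
  assumes V: "\<And>D. V D = vs.span (S D)"
    and fin: "\<And>D. finite (S D)" and card: "\<And>D. card (S D) \<le> C * (D + 1)"
    and mono: "\<And>D D'. D \<le> D' \<Longrightarrow> V D \<subseteq> V D'"
    and one: "1 \<in> V 0"
    and mult: "\<And>D E p q. p \<in> V D \<Longrightarrow> q \<in> V E \<Longrightarrow> p * q \<in> V (D + E + K)"
    and pq: "p1 \<in> V d" "q1 \<in> V d" "p2 \<in> V d" "q2 \<in> V d" "q1 \<noteq> 0" "q2 \<noteq> 0"
    and b: "b1 \<noteq> b2" "b1 = p1 / q1" "b2 = p2 / q2"
  shows "\<not> alg_indep (range j) {b1, b2}"
proof
  assume ai: "alg_indep (range j) {b1, b2}"
  have pw: "p ^ n \<in> V (n * (d + K))" if "p \<in> V d" for p n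
  proof (induction n)
    case 0 thus ?case using one by simp
  next
    case (Suc n)
    have "p * p ^ n \<in> V (d + n * (d + K) + K)" by (rule mult[OF that Suc])
    moreover have "d + n * (d + K) + K = Suc n * (d + K)" by simp
    ultimately show ?case by simp
  qed
  define \<alpha> where "\<alpha> = 2 * C * (d + K)"
  define \<beta> where "\<beta> = 3 * C * K + C"
  define N where "N = \<alpha> + \<beta> + 1"
  define D0 where "D0 = 2 * N * (d + K) + 3 * K"
  define e where "e x = (p1 ^ fst x * q1 ^ (N - fst x)) * (p2 ^ snd x * q2 ^ (N - snd x))" for x
  define Qn where "Qn = q1 ^ N * q2 ^ N"
  define mo where "mo x = b1 ^ fst x * b2 ^ snd x" for x :: "nat \<times> nat"
  define I where "I = {..N} \<times> {..N}"
  have Qn0: "Qn \<noteq> 0" using pq by (simp add: Qn_def)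
  have p1e: "p1 = b1 * q1" "p2 = b2 * q2" using b pq by simp_all
  have e_eq: "e x = Qn * mo x" if xI: "x \<in> I" for x
  proof -
    obtain a c where x: "x = (a, c)" "a \<le> N" "c \<le> N" using xI unfolding I_def by auto
    have "q1 ^ N = q1 ^ a * q1 ^ (N - a)" "q2 ^ N = q2 ^ c * q2 ^ (N - c)"
      using x by (simp_all add: power_add[symmetric])
    thus ?thesis unfolding e_def Qn_def mo_def x p1e by (simp add: power_mult_distrib algebra_simps)
  qed
  have eV: "e x \<in> V D0" if xI: "x \<in> I" for x
  proof -
    obtain a c where x: "x = (a, c)" "a \<le> N" "c \<le> N" using xI unfolding I_def by auto
    have 1: "p1 ^ a * q1 ^ (N - a) \<in> V (a * (d + K) + (N - a) * (d + K) + K)"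
      by (intro mult pw pq)
    have 2: "p2 ^ c * q2 ^ (N - c) \<in> V (c * (d + K) + (N - c) * (d + K) + K)"
      by (intro mult pw pq)
    have "a * (d + K) + (N - a) * (d + K) = N * (d + K)" using x by (simp add: add_mult_distrib[symmetric])
    moreover have "c * (d + K) + (N - c) * (d + K) = N * (d + K)" using x by (simp add: add_mult_distrib[symmetric])
    ultimately have "e x \<in> V ((N * (d + K) + K) + (N * (d + K) + K) + K)"
      using mult[OF 1 2] unfolding e_def x by simp
    moreover have "(N * (d + K) + K) + (N * (d + K) + K) + K = D0" unfolding D0_def by simp
    ultimately show ?thesis by simp
  qed
  have cardS: "card (S D0) < card I"
  proof -
    have "card (S D0) \<le> C * (D0 + 1)" by (rule card)
    also have "C * (D0 + 1) = \<alpha> * N + \<beta>" unfolding D0_def \<alpha>_def \<beta>_def by (simp add: algebra_simps)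
    also have "\<dots> < N * N + N + N + 1"
    proof -
      have "\<beta> \<le> \<beta> * N" unfolding N_def by simp
      hence "\<alpha> * N + \<beta> \<le> \<alpha> * N + \<beta> * N" by simp
      also have "\<dots> < (\<alpha> + \<beta> + 1) * N + 1" by (simp add: algebra_simps)
      also have "\<dots> = N * N + 1" unfolding N_def by simp
      finally show ?thesis by simp
    qed
    also have "N * N + N + N + 1 = card I" unfolding I_def by (simp add: algebra_simps)
    finally show ?thesis .
  qed
  show False
  proof (cases "inj_on e I")
    case True
    have sub: "e ` I \<subseteq> vs.span (S D0)" using eV V by auto
    have "vs.dependent (e ` I)"
    proof (rule ccontr)
      assume "\<not> vs.dependent (e ` I)"
      hence "card (e ` I) \<le> card (S D0)" using vs.independent_span_bound[OF fin _ sub] by auto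
      moreover have "card (e ` I) = card I" using card_image[OF True] .
      ultimately show False using cardS by simp
    qed
    then obtain t c where t: "finite t" "t \<subseteq> e ` I" and s: "(\<Sum>v\<in>t. j (c v) * v) = 0"
      and nz: "\<exists>v\<in>t. c v \<noteq> 0"
      unfolding vs.dependent_explicit by blast
    define I' where "I' = {x \<in> I. e x \<in> t}"
    have tI: "t = e ` I'" using t unfolding I'_def by auto
    have inj': "inj_on e I'" using True unfolding I'_def by (rule inj_on_subset) auto
    have finI: "finite I'" unfolding I'_def I_def by simp
    have "(\<Sum>x\<in>I'. j (c (e x)) * e x) = 0" using s unfolding tI sum.reindex[OF inj'] by simp
    hence "(\<Sum>x\<in>I'. j (c (e x)) * (Qn * mo x)) = 0"
      using e_eq by (simp add: I'_def)
    hence "Qn * (\<Sum>x\<in>I'. j (c (e x)) * mo x) = 0"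
      by (simp add: sum_distrib_left algebra_simps)
    hence "(\<Sum>x\<in>I'. j (c (e x)) * (b1 ^ fst x * b2 ^ snd x)) = 0" using Qn0 by (simp add: mo_def)
    hence "\<forall>x\<in>I'. j (c (e x)) = 0"
      by (intro alg_indep_pair_sum[OF ai b(1) finI]) auto
    thus False using nz unfolding tI by auto
  next
    case False
    then obtain x y where xy: "x \<in> I" "y \<in> I" "x \<noteq> y" "e x = e y" unfolding inj_on_def by blast
    have "mo x = mo y" using xy e_eq Qn0 by simp
    define c where "c z = (if z = x then 1 else -1 :: 'l)" for z
    have "(\<Sum>z\<in>{x, y}. c z * (b1 ^ fst z * b2 ^ snd z)) = 0"
      using xy \<open>mo x = mo y\<close> by (simp add: c_def mo_def)
    hence "\<forall>z\<in>{x, y}. c z = 0"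
      by (intro alg_indep_pair_sum[OF ai b(1)]) (auto simp: c_def intro: image_eqI[of _ _ 1] image_eqI[of _ _ "-1"] simp: j_neg)
    thus False by (simp add: c_def)
  qed
qed

end

lemma frac_subfield:
  fixes Rg :: "'a::field set"
  assumes z: "0 \<in> Rg" and o: "1 \<in> Rg" and add: "\<And>x y. x \<in> Rg \<Longrightarrow> y \<in> Rg \<Longrightarrow> x + y \<in> Rg"
    and mul: "\<And>x y. x \<in> Rg \<Longrightarrow> y \<in> Rg \<Longrightarrow> x * y \<in> Rg" and neg: "\<And>x. x \<in> Rg \<Longrightarrow> - x \<in> Rg"
  shows "is_subfield {p / q | p q. p \<in> Rg \<and> q \<in> Rg}"
proof -
  define R where "R = {p / q | p q. p \<in> Rg \<and> q \<in> Rg}"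
  have RI: "p / q \<in> R" if "p \<in> Rg" "q \<in> Rg" for p q unfolding R_def using that by blast
  have RE: "\<exists>p q. p \<in> Rg \<and> q \<in> Rg \<and> a = p / q" if "a \<in> R" for a using that unfolding R_def by blast
  have "is_subfield R"
    unfolding is_subfield_def
  proof (intro conjI ballI)
    show "0 \<in> R" using RI[OF z o] by simp
    show "1 \<in> R" using RI[OF o o] by simp
    fix a b assume a: "a \<in> R" and b: "b \<in> R"
    obtain p q where pq: "p \<in> Rg" "q \<in> Rg" "a = p / q" using RE[OF a] by blast
    obtain p' q' where pq': "p' \<in> Rg" "q' \<in> Rg" "b = p' / q'" using RE[OF b] by blast
    have "a * b = (p * p') / (q * q')" using pq pq' by simp
    thus "a * b \<in> R" using RI[OF mul[OF pq(1) pq'(1)] mul[OF pq(2) pq'(2)]] by simp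
    show "a + b \<in> R"
    proof (cases "q = 0")
      case True thus ?thesis using pq b by simp
    next
      case q0: False
      show ?thesis
      proof (cases "q' = 0")
        case True thus ?thesis using pq' a by simp
      next
        case False
        hence "a + b = (p * q' + p' * q) / (q * q')" using pq pq' q0 by (simp add: add_frac_eq)
        thus ?thesis using RI[OF add[OF mul[OF pq(1) pq'(2)] mul[OF pq'(1) pq(2)]] mul[OF pq(2) pq'(2)]] by simp
      qed
    qed
  next
    fix a assume a: "a \<in> R"
    obtain p q where pq: "p \<in> Rg" "q \<in> Rg" "a = p / q" using RE[OF a] by blast
    have "- a = (- p) / q" using pq by simp
    thus "- a \<in> R" using RI[OF neg[OF pq(1)] pq(2)] by simp
    have "inverse a = q / p" using pq by simp
    thus "inverse a \<in> R" using RI[OF pq(2) pq(1)] by simp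
  qed
  thus ?thesis unfolding R_def .
qed

context kemb begin

lemma integ_dep:
  fixes z u w :: 'l and m n :: nat and g h :: "nat \<Rightarrow> 'k poly"
  assumes m: "0 < m"
    and ru: "u ^ m = (\<Sum>i<m. pe (g i) z * u ^ i)"
    and rw: "w ^ 2 = (\<Sum>i<n. pe (h i) z * u ^ i)"
  shows "\<exists>R. is_subfield R \<and> range j \<subseteq> R \<and> z \<in> R \<and> u \<in> R \<and> w \<in> R \<and>
     (\<forall>b1\<in>R. \<forall>b2\<in>R. b1 \<noteq> b2 \<longrightarrow> \<not> alg_indep (range j) {b1, b2})"
proof -
  define S where "S D = (\<lambda>(a, b, c). z ^ a * u ^ b * w ^ c) ` ({..D} \<times> {..<m} \<times> {..<2::nat})" for D
  define V where "V D = vs.span (S D)" for D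
  have fin: "finite (S D)" for D by (simp add: S_def)
  have card: "card (S D) \<le> (2 * m) * (D + 1)" for D
    unfolding S_def by (rule card_image_le[THEN order.trans]) (simp_all add: card_cartesian_product)
  have mono: "V D \<subseteq> V D'" if "D \<le> D'" for D D'
    unfolding V_def by (rule vs.span_mono) (unfold S_def, rule image_mono, use that in auto)
  have Vm: "x \<in> V D'" if "x \<in> V D" "D \<le> D'" for x D D' using mono that by blast
  have Sin: "z ^ a * u ^ b * w ^ c \<in> V D" if "a \<le> D" "b < m" "c < 2" for a b c D
    unfolding V_def by (rule vs.span_base, unfold S_def, rule image_eqI[where x="(a, b, c)"]) (use that in auto)
  have Vsum: "sum f A \<in> V D" if "\<And>i. i \<in> A \<Longrightarrow> f i \<in> V D" for f :: "nat \<Rightarrow> 'l" and A D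
    unfolding V_def by (rule vs.span_sum) (use that in \<open>simp add: V_def\<close>)
  have Vscale: "j c * x \<in> V D" if "x \<in> V D" for c x D
    using that unfolding V_def by (rule vs.span_scale)
  have lin: "c * x \<in> V E" if "x \<in> V D" "\<And>a b e. a \<le> D \<Longrightarrow> b < m \<Longrightarrow> e < 2 \<Longrightarrow> c * (z ^ a * u ^ b * w ^ e) \<in> V E"
    for c x D E
    using that(1) unfolding V_def
    by (rule span_mult_lin) (use that(2) in \<open>auto simp: S_def V_def\<close>)
  have Mz: "z * x \<in> V (D + 1)" if "x \<in> V D" for x D
  proof (rule lin[OF that])
    fix a b e assume "a \<le> D" "b < m" "e < (2::nat)"
    hence "z ^ Suc a * u ^ b * w ^ e \<in> V (D + 1)" by (intro Sin) auto
    thus "z * (z ^ a * u ^ b * w ^ e) \<in> V (D + 1)" by (simp add: mult.assoc)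
  qed
  have Mzp: "z ^ r * x \<in> V (D + r)" if "x \<in> V D" for x D r
  proof (induction r)
    case 0 thus ?case using that by simp
  next
    case (Suc r)
    have "z * (z ^ r * x) \<in> V (D + r + 1)" by (rule Mz[OF Suc])
    thus ?case by (simp add: mult.assoc)
  qed
  have Mpe: "pe p z * x \<in> V (D + degree p)" if "x \<in> V D" for p x D
  proof -
    have "pe p z * x = (\<Sum>i\<le>degree p. j (coeff p i) * (z ^ i * x))"
      by (simp add: pe_expand[of p "degree p"] sum_distrib_right mult.assoc)
    also have "\<dots> \<in> V (D + degree p)"
      by (intro Vsum Vscale Vm[OF Mzp[OF that]]) simp
    finally show ?thesis .
  qed
  define Ku where "Ku = (\<Sum>i<m. degree (g i))"
  have gK: "degree (g i) \<le> Ku" if "i < m" for i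
    unfolding Ku_def using that by (intro member_le_sum) auto
  have Mu: "u * x \<in> V (D + Ku)" if "x \<in> V D" for x D
  proof (rule lin[OF that])
    fix a b e assume ab: "a \<le> D" "b < m" "e < (2::nat)"
    show "u * (z ^ a * u ^ b * w ^ e) \<in> V (D + Ku)"
    proof (cases "Suc b < m")
      case True
      hence "z ^ a * u ^ Suc b * w ^ e \<in> V D" using ab by (intro Sin) auto
      moreover have "u * (z ^ a * u ^ b * w ^ e) = z ^ a * u ^ Suc b * w ^ e" by (simp add: ac_simps)
      ultimately have "u * (z ^ a * u ^ b * w ^ e) \<in> V D" by metis
      thus ?thesis using Vm[of _ D "D + Ku"] by simp
    next
      case False
      hence bm: "Suc b = m" using ab by simp
      have "u * (z ^ a * u ^ b * w ^ e) = u ^ Suc b * (z ^ a * w ^ e)"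
        by (simp add: ac_simps)
      also have "\<dots> = u ^ m * (z ^ a * w ^ e)" by (simp only: bm)
      also have "\<dots> = (\<Sum>i<m. pe (g i) z * u ^ i * (z ^ a * w ^ e))"
        by (simp only: ru sum_distrib_right)
      also have "\<dots> = (\<Sum>i<m. pe (g i) z * (z ^ a * u ^ i * w ^ e))"
        by (intro sum.cong refl) (simp add: ac_simps)
      also have "\<dots> \<in> V (D + Ku)"
      proof (intro Vsum)
        fix i assume i: "i \<in> {..<m}"
        have "z ^ a * u ^ i * w ^ e \<in> V D" using ab i by (intro Sin) auto
        hence "pe (g i) z * (z ^ a * u ^ i * w ^ e) \<in> V (D + degree (g i))" by (rule Mpe)
        thus "pe (g i) z * (z ^ a * u ^ i * w ^ e) \<in> V (D + Ku)"
          by (rule Vm) (use gK i in auto)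
      qed
      finally show ?thesis .
    qed
  qed
  have Mup: "u ^ r * x \<in> V (D + r * Ku)" if "x \<in> V D" for x D r
  proof (induction r)
    case 0 thus ?case using that by simp
  next
    case (Suc r)
    have "u * (u ^ r * x) \<in> V (D + r * Ku + Ku)" by (rule Mu[OF Suc])
    thus ?case by (simp add: mult.assoc algebra_simps)
  qed
  define Kh where "Kh = (\<Sum>i<n. degree (h i))"
  have hK: "degree (h i) \<le> Kh" if "i < n" for i
    unfolding Kh_def using that by (intro member_le_sum) auto
  define Kw where "Kw = n * Ku + Kh"
  have Mw: "w * x \<in> V (D + Kw)" if "x \<in> V D" for x D
  proof (rule lin[OF that])
    fix a b e assume ab: "a \<le> D" "b < m" "e < (2::nat)"
    show "w * (z ^ a * u ^ b * w ^ e) \<in> V (D + Kw)"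
    proof (cases "e = 0")
      case True
      hence "z ^ a * u ^ b * w ^ 1 \<in> V D" using ab by (intro Sin) auto
      moreover have "w * (z ^ a * u ^ b * w ^ e) = z ^ a * u ^ b * w ^ 1" using True by (simp add: ac_simps)
      ultimately have "w * (z ^ a * u ^ b * w ^ e) \<in> V D" by metis
      thus ?thesis using Vm[of _ D "D + Kw"] by simp
    next
      case False
      hence e1: "e = 1" using ab by simp
      have "w * (z ^ a * u ^ b * w ^ e) = w ^ 2 * (z ^ a * u ^ b * w ^ 0)"
        by (simp add: e1 power2_eq_square ac_simps)
      also have "\<dots> = (\<Sum>i<n. pe (h i) z * u ^ i * (z ^ a * u ^ b * w ^ 0))"
        by (simp only: rw sum_distrib_right)
      also have "\<dots> = (\<Sum>i<n. pe (h i) z * (u ^ i * (z ^ a * u ^ b * w ^ 0)))"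
        by (simp only: mult.assoc)
      also have "\<dots> \<in> V (D + Kw)"
      proof (intro Vsum)
        fix i assume i: "i \<in> {..<n}"
        have "z ^ a * u ^ b * w ^ 0 \<in> V D" using ab by (intro Sin) auto
        hence "u ^ i * (z ^ a * u ^ b * w ^ 0) \<in> V (D + i * Ku)" by (rule Mup)
        hence "u ^ i * (z ^ a * u ^ b * w ^ 0) \<in> V (D + n * Ku)"
          by (rule Vm) (use i in auto)
        hence "pe (h i) z * (u ^ i * (z ^ a * u ^ b * w ^ 0)) \<in> V (D + n * Ku + degree (h i))" by (rule Mpe)
        thus "pe (h i) z * (u ^ i * (z ^ a * u ^ b * w ^ 0)) \<in> V (D + Kw)"
          by (rule Vm) (use hK i in \<open>auto simp: Kw_def\<close>)
      qed
      finally show ?thesis .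
    qed
  qed
  define K where "K = m * Ku + Kw"
  have Mult: "x * y \<in> V (D + E + K)" if "x \<in> V D" "y \<in> V E" for x y D E
  proof (rule lin[OF that(2)])
    fix a b e assume ab: "a \<le> E" "b < m" "e < (2::nat)"
    have 1: "u ^ b * (z ^ a * x) \<in> V (D + a + b * Ku)" by (intro Mup Mzp that(1))
    have 2: "w ^ e * (u ^ b * (z ^ a * x)) \<in> V (D + a + b * Ku + e * Kw)"
    proof (cases "e = 0")
      case True thus ?thesis using 1 by simp
    next
      case False
      hence "e = 1" using ab by simp
      thus ?thesis using Mw[OF 1] by simp
    qed
    have "D + a + b * Ku + e * Kw \<le> D + E + K"
    proof -
      have "b * Ku \<le> m * Ku" using ab by simp
      moreover have "e * Kw \<le> Kw" using ab by (cases e) auto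
      ultimately show ?thesis using ab unfolding K_def by linarith
    qed
    hence "w ^ e * (u ^ b * (z ^ a * x)) \<in> V (D + E + K)" using 2 Vm by blast
    moreover have "w ^ e * (u ^ b * (z ^ a * x)) = x * (z ^ a * u ^ b * w ^ e)" by (simp add: ac_simps)
    ultimately show "x * (z ^ a * u ^ b * w ^ e) \<in> V (D + E + K)" by metis
  qed
  have one: "1 \<in> V 0" using Sin[of 0 0 0 0] m by simp
  define Rg where "Rg = (\<Union>D. V D)"
  have Rg0: "0 \<in> Rg" using Vscale[OF one, of 0] unfolding Rg_def by auto
  have Rg1: "1 \<in> Rg" using one unfolding Rg_def by auto
  have Rgadd: "x + y \<in> Rg" if hx: "x \<in> Rg" and hy: "y \<in> Rg" for x y
  proof -
    obtain D E where "x \<in> V D" "y \<in> V E" using hx hy unfolding Rg_def by auto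
    hence "x \<in> V (D + E)" "y \<in> V (D + E)" using Vm by auto
    hence "x + y \<in> V (D + E)" unfolding V_def by (rule vs.span_add)
    thus ?thesis unfolding Rg_def by auto
  qed
  have Rgmul: "x * y \<in> Rg" if "x \<in> Rg" "y \<in> Rg" for x y
    using that Mult unfolding Rg_def by blast
  have Rgneg: "- x \<in> Rg" if "x \<in> Rg" for x
    using that vs.span_neg unfolding Rg_def V_def by blast
  have Rgj: "j c \<in> Rg" for c using Vscale[OF one, of c] unfolding Rg_def by auto
  have Rgz: "z \<in> Rg" using Mz[OF one] unfolding Rg_def by auto
  have Rgu: "u \<in> Rg" using Mu[OF one] unfolding Rg_def by auto
  have Rgw: "w \<in> Rg" using Mw[OF one] unfolding Rg_def by auto
  define R where "R = {p / q | p q. p \<in> Rg \<and> q \<in> Rg}"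
  have RS: "is_subfield R" unfolding R_def by (rule frac_subfield[OF Rg0 Rg1 Rgadd Rgmul Rgneg])
  have inR: "x \<in> R" if "x \<in> Rg" for x unfolding R_def using that Rg1 by force
  have rep: "\<exists>p q. p \<in> Rg \<and> q \<in> Rg \<and> q \<noteq> 0 \<and> b = p / q" if hb: "b \<in> R" for b
  proof -
    obtain p q where pq: "p \<in> Rg" "q \<in> Rg" "b = p / q" using hb unfolding R_def by auto
    show ?thesis
    proof (cases "q = 0")
      case True thus ?thesis using pq Rg0 Rg1 by (intro exI[of _ 0] exI[of _ 1]) auto
    qed (use pq in auto)
  qed
  have dep: "\<not> alg_indep (range j) {b1, b2}" if hb: "b1 \<in> R" "b2 \<in> R" "b1 \<noteq> b2" for b1 b2
  proof -
    obtain p1 q1 where 1: "p1 \<in> Rg" "q1 \<in> Rg" "q1 \<noteq> 0" "b1 = p1 / q1" using rep hb by blast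
    obtain p2 q2 where 2: "p2 \<in> Rg" "q2 \<in> Rg" "q2 \<noteq> 0" "b2 = p2 / q2" using rep hb by blast
    obtain d1 d2 d3 d4 where d: "p1 \<in> V d1" "q1 \<in> V d2" "p2 \<in> V d3" "q2 \<in> V d4"
      using 1 2 unfolding Rg_def by blast
    define d where "d = d1 + d2 + d3 + d4"
    have dd: "p1 \<in> V d" "q1 \<in> V d" "p2 \<in> V d" "q2 \<in> V d" using d Vm unfolding d_def by (meson le_add1 le_add2 le_trans)+
    show ?thesis
      by (rule count_dep[where V=V and S=S and C="2 * m" and K=K, OF V_def fin card mono one Mult
          dd 1(3) 2(3) hb(3) 1(4) 2(4)])
  qed
  show ?thesis
    by (rule exI[of _ R]) (use RS inR Rgj Rgz Rgu Rgw dep in auto)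
qed

end

context kemb begin

lemma pe_pCons[simp]: "pe (pCons c p) u = j c + u * pe p u"
  by (simp add: pe_def map_poly_pCons)

lemma pe_in_subfield:
  assumes S: "is_subfield S" and sub: "range j \<subseteq> S" "u \<in> S"
  shows "pe p u \<in> S"
  using pe_expand[of p "degree p" u] sub
  by (auto intro!: sf_sum[OF S] sf_mult[OF S] sf_power[OF S])

lemma dep_case:
  assumes rel: "t1 ^ 2 - j a * t2 ^ 2 = pe f x0" and a0: "a \<noteq> 0"
    and ni: "\<not> indep2 x0 t1"
  shows "\<exists>R. is_subfield R \<and> range j \<subseteq> R \<and> x0 \<in> R \<and> t1 \<in> R \<and> t2 \<in> R \<and>
     (\<forall>b1\<in>R. \<forall>b2\<in>R. b1 \<noteq> b2 \<longrightarrow> \<not> alg_indep (range j) {b1, b2})"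
proof (cases "\<exists>p. p \<noteq> 0 \<and> pe p x0 = 0")
  case True
  then obtain p where p0: "p \<noteq> 0" and px: "pe p x0 = 0" by blast
  define m where "m = degree p"
  define c where "c = lead_coeff p"
  have c0: "c \<noteq> 0" using p0 by (simp add: c_def)
  have m0: "0 < m"
  proof (rule ccontr)
    assume "\<not> 0 < m"
    hence "m = 0" by simp
    hence "p = [:c:]" unfolding c_def m_def by (metis degree_0_id)
    hence "pe p x0 = j c" by simp
    thus False using px c0 by simp
  qed
  have "0 = pe p x0" using px by simp
  also have "\<dots> = (\<Sum>i\<le>m. j (coeff p i) * x0 ^ i)" by (rule pe_expand) (simp add: m_def)
  also have "\<dots> = (\<Sum>i<m. j (coeff p i) * x0 ^ i) + j c * x0 ^ m"
    by (simp add: lessThan_Suc_atMost[symmetric] c_def m_def)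
  finally have e1: "j c * x0 ^ m = - (\<Sum>i<m. j (coeff p i) * x0 ^ i)" by (simp add: eq_neg_iff_add_eq_0 add.commute)
  define g where "g i = [: - (coeff p i / c) :]" for i
  have ru: "x0 ^ m = (\<Sum>i<m. pe (g i) t2 * x0 ^ i)"
  proof -
    have "x0 ^ m = inverse (j c) * (j c * x0 ^ m)" using c0 by simp
    also have "\<dots> = (\<Sum>i<m. pe (g i) t2 * x0 ^ i)"
      unfolding e1 by (simp add: g_def sum_distrib_left j_simps field_simps sum_negf)
    finally show ?thesis .
  qed
  define n where "n = Suc (degree f)"
  define h where "h i = [:coeff f i:] + (if i = 0 then [:0, 0, a:] else 0)" for i
  have rw: "t1 ^ 2 = (\<Sum>i<n. pe (h i) t2 * x0 ^ i)"
  proof -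
    have "(\<Sum>i<n. pe (h i) t2 * x0 ^ i) = (\<Sum>i<n. j (coeff f i) * x0 ^ i) + (\<Sum>i<n. (if i = 0 then j a * t2 ^ 2 else 0) * x0 ^ i)"
      unfolding sum.distrib[symmetric] by (intro sum.cong refl) (simp add: h_def algebra_simps power2_eq_square)
    also have "(\<Sum>i<n. (if i = 0 then j a * t2 ^ 2 else 0) * x0 ^ i) = j a * t2 ^ 2"
      by (simp add: if_distrib[of "\<lambda>v. v * _"] n_def cong: if_cong)
    also have "(\<Sum>i<n. j (coeff f i) * x0 ^ i) = pe f x0"
      by (simp add: pe_expand[of f "degree f"] n_def lessThan_Suc_atMost)
    finally show ?thesis using rel by (simp add: algebra_simps)
  qed
  obtain R where R: "is_subfield R" "range j \<subseteq> R" "t2 \<in> R" "x0 \<in> R" "t1 \<in> R"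
    "\<forall>b1\<in>R. \<forall>b2\<in>R. b1 \<noteq> b2 \<longrightarrow> \<not> alg_indep (range j) {b1, b2}"
    using integ_dep[OF m0 ru rw] by blast
  thus ?thesis by blast
next
  case False
  hence tr: "pe p x0 \<noteq> 0" if "p \<noteq> 0" for p using that by blast
  obtain R0 where R00: "R0 \<noteq> 0" and eR: "ev x0 t1 R0 = 0" using ni unfolding indep2_def by blast
  define m where "m = degree R0"
  define cc where "cc = lead_coeff R0"
  define r where "r i = pe (coeff R0 i) x0" for i
  define \<gamma> where "\<gamma> = pe cc x0"
  have cc0: "cc \<noteq> 0" using R00 by (simp add: cc_def)
  have \<gamma>0: "\<gamma> \<noteq> 0" using tr[OF cc0] by (simp add: \<gamma>_def)
  have "0 = ev x0 t1 R0" using eR by simp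
  also have "\<dots> = (\<Sum>i\<le>m. r i * t1 ^ i)" by (simp add: ev_expand[of R0 m] m_def r_def)
  also have "\<dots> = (\<Sum>i<m. r i * t1 ^ i) + \<gamma> * t1 ^ m"
    by (simp add: lessThan_Suc_atMost[symmetric] r_def \<gamma>_def cc_def m_def)
  finally have e1: "\<gamma> * t1 ^ m = - (\<Sum>i<m. r i * t1 ^ i)" by (simp add: eq_neg_iff_add_eq_0 add.commute)
  have m0: "0 < m"
  proof (rule ccontr)
    assume "\<not> 0 < m"
    hence "m = 0" by simp
    hence "\<gamma> = 0" using e1 by simp
    thus False using \<gamma>0 by simp
  qed
  define u where "u = \<gamma> * t1"
  define w where "w = \<gamma> * t2"
  define g where "g i = - (coeff R0 i * cc ^ (m - 1 - i))" for i
  have ru: "u ^ m = (\<Sum>i<m. pe (g i) x0 * u ^ i)"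
  proof -
    have gm: "\<gamma> ^ m = \<gamma> ^ (m - 1) * \<gamma>" using m0 by (metis Suc_diff_1 power_Suc2)
    have "u ^ m = \<gamma> ^ (m - 1) * (\<gamma> * t1 ^ m)"
      by (simp add: u_def power_mult_distrib gm mult.assoc)
    also have "\<dots> = (\<Sum>i<m. - (r i * \<gamma> ^ (m - 1)) * t1 ^ i)"
      unfolding e1 by (simp add: sum_distrib_left sum_negf algebra_simps)
    also have "\<dots> = (\<Sum>i<m. pe (g i) x0 * u ^ i)"
    proof (intro sum.cong refl)
      fix i assume "i \<in> {..<m}"
      hence "\<gamma> ^ (m - 1) = \<gamma> ^ (m - 1 - i) * \<gamma> ^ i" by (simp add: power_add[symmetric])
      thus "- (r i * \<gamma> ^ (m - 1)) * t1 ^ i = pe (g i) x0 * u ^ i"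
        by (simp add: g_def r_def \<gamma>_def u_def power_mult_distrib algebra_simps)
    qed
    finally show ?thesis .
  qed
  define h where "h i = (if i = 0 then smult (- inverse a) (cc ^ 2 * f) else if i = 2 then [:inverse a:] else 0)" for i :: nat
  have rw: "w ^ 2 = (\<Sum>i<(3::nat). pe (h i) x0 * u ^ i)"
  proof -
    have t2e: "t2 ^ 2 = (t1 ^ 2 - pe f x0) / j a" using rel a0 by (simp add: field_simps)
    have "(\<Sum>i<(3::nat). pe (h i) x0 * u ^ i) = pe (h 0) x0 + pe (h 2) x0 * u ^ 2"
      by (simp add: numeral_3_eq_3 lessThan_Suc h_def power2_eq_square)
    also have "\<dots> = (\<gamma> ^ 2 * t1 ^ 2 - \<gamma> ^ 2 * pe f x0) / j a"
      using a0 by (simp add: h_def u_def \<gamma>_def j_simps power_mult_distrib field_simps)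
    also have "\<dots> = w ^ 2" by (simp add: w_def t2e power_mult_distrib field_simps)
    finally show ?thesis ..
  qed
  obtain R where R: "is_subfield R" "range j \<subseteq> R" "x0 \<in> R" "u \<in> R" "w \<in> R"
    "\<forall>b1\<in>R. \<forall>b2\<in>R. b1 \<noteq> b2 \<longrightarrow> \<not> alg_indep (range j) {b1, b2}"
    using integ_dep[OF m0 ru rw] by blast
  have "\<gamma> \<in> R" unfolding \<gamma>_def by (rule pe_in_subfield) (use R in auto)
  hence "u / \<gamma> \<in> R" "w / \<gamma> \<in> R" using R sf_div by auto
  moreover have "u / \<gamma> = t1" "w / \<gamma> = t2" using \<gamma>0 by (simp_all add: u_def w_def)
  ultimately show ?thesis using R by auto
qed

end

context kemb begin

lemma sq_in_FR:
  assumes a0: "a \<noteq> 0" and rel: "j a * z ^ 2 = v ^ 2 - pe f u"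
  shows "z * z = ev u v [: - f, 0, 1 :] / ev u v [:[:a:]:]" "z * z \<in> FR u v"
proof -
  show 1: "z * z = ev u v [: - f, 0, 1 :] / ev u v [:[:a:]:]"
    using rel a0 by (simp add: field_simps power2_eq_square)
  show "z * z \<in> FR u v" unfolding 1 by (rule FR_I)
qed

lemma qext_FR_gen:
  assumes zz: "z * z \<in> FR u v"
  shows "qext (FR u v) z = gen_field (range j \<union> {u, v, z})"
proof
  have S: "is_subfield (FR u v)" by (rule FR_subfield)
  show "qext (FR u v) z \<subseteq> gen_field (range j \<union> {u, v, z})"
  proof (rule qext_min[OF gen_field_is_subfield])
    show "FR u v \<subseteq> gen_field (range j \<union> {u, v, z})"
      unfolding FR_gen[symmetric] by (rule gen_field_mono) auto
    show "z \<in> gen_field (range j \<union> {u, v, z})" using gen_field_incl[of "range j \<union> {u, v, z}"] by auto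
  qed
  show "gen_field (range j \<union> {u, v, z}) \<subseteq> qext (FR u v) z"
  proof (rule gen_field_min[OF qext_subfield[OF S zz]])
    have "range j \<union> {u, v} \<subseteq> FR u v" unfolding FR_gen[symmetric] by (rule gen_field_incl)
    hence "range j \<union> {u, v} \<subseteq> qext (FR u v) z" using qext_base[OF S, of z] by (rule order.trans)
    thus "range j \<union> {u, v, z} \<subseteq> qext (FR u v) z" using qext_z[OF S, of z] by auto
  qed
qed

end

theorem lemma2p2:
  fixes a :: "'k::field" and f :: "'k poly"
    and \<iota> :: "'k \<Rightarrow> 'o::field" and s x y :: "'o" and \<sigma> :: "'o \<Rightarrow> 'o"
    and K Lxy :: "'o set"
  assumes char: "(2::'k) \<noteq> 0"
    and nonsq: "\<not> (\<exists>b. b * b = a)"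
    and f_nz: "f \<noteq> 0"
    and emb: "field_emb \<iota>"
    and sqrt_a: "s * s = \<iota> a"
    and K_def: "K = gen_field (range \<iota> \<union> {s})"
    and xy_indep: "x \<noteq> y" "alg_indep K {x, y}"
    and Lxy_def: "Lxy = gen_field (K \<union> {x, y})"
    and \<sigma>_bij: "bij_betw \<sigma> Lxy Lxy"
    and \<sigma>_hom: "\<forall>u\<in>Lxy. \<forall>v\<in>Lxy. \<sigma> (u + v) = \<sigma> u + \<sigma> v \<and> \<sigma> (u * v) = \<sigma> u * \<sigma> v"
    and \<sigma>_k: "\<forall>c. \<sigma> (\<iota> c) = \<iota> c"
    and \<sigma>_s: "\<sigma> s = - s"
    and \<sigma>_x: "\<sigma> x = x"
    and \<sigma>_y: "\<sigma> y = poly (map_poly \<iota> f) x / y"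
  shows "(\<exists>t1 t2. t1 \<in> {u \<in> Lxy. \<sigma> u = u} \<and> t2 \<in> {u \<in> Lxy. \<sigma> u = u} \<and>
            {u \<in> Lxy. \<sigma> u = u} = gen_field (range \<iota> \<union> {x, t1, t2}) \<and>
            trdeg_eq (range \<iota>) {u \<in> Lxy. \<sigma> u = u} 2 \<and>
            t1 ^ 2 - \<iota> a * t2 ^ 2 = poly (map_poly \<iota> f) x)
       \<and> (\<forall>(j :: 'k \<Rightarrow> 'l::field) x0 t1 t2 L0.
            field_emb j \<and> L0 = gen_field (range j \<union> {x0, t1, t2}) \<and>
            trdeg_eq (range j) L0 2 \<and>
            t1 ^ 2 - j a * t2 ^ 2 = poly (map_poly j f) x0
            \<longrightarrow> k_iso j L0 \<iota> {u \<in> Lxy. \<sigma> u = u})"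
proof -
  interpret I: kemb \<iota> by unfold_locales (rule emb)
  have nsq: "\<forall>b. b * b \<noteq> a" using nonsq by blast
  have a0: "a \<noteq> 0" using nsq by (metis mult_zero_left)
  have two: "(2::'o) \<noteq> 0"
  proof
    assume "(2::'o) = 0"
    hence "\<iota> 2 = 0" using I.j_numeral[of "num.Bit0 num.One"] by simp
    thus False using char by simp
  qed
  have four: "(4::'o) \<noteq> 0"
  proof -
    have "(4::'o) = 2 * 2" by simp
    thus ?thesis using two by (metis mult_eq_0_iff)
  qed
  have s0: "s \<noteq> 0" using sqrt_a a0 by auto
  have Kr: "range \<iota> \<subseteq> K" using gen_field_incl[of "range \<iota> \<union> {s}"] unfolding K_def by blast
  have ind_xy: "I.indep2 x y" by (rule I.alg_indep_indep2[OF xy_indep(2) xy_indep(1) Kr])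
  define F where "F = poly (map_poly \<iota> f) x"
  have Fpe: "F = I.pe f x" unfolding F_def I.pe_def ..
  have F0: "F \<noteq> 0"
  proof -
    have "I.ev x y [:f:] \<noteq> 0" by (rule I.indep2_ev_nz[OF ind_xy]) (simp add: f_nz)
    thus ?thesis by (simp add: Fpe)
  qed
  have y0: "y \<noteq> 0"
  proof -
    have "I.ev x y [:0, 1:] \<noteq> 0" by (rule I.indep2_ev_nz[OF ind_xy]) simp
    thus ?thesis by simp
  qed
  define T1 where "T1 = (y + F / y) / 2"
  define T2 where "T2 = (y - F / y) / (2 * s)"
  have rel: "2 * y * T1 = y ^ 2 + I.pe f x"
    using two y0 unfolding T1_def Fpe[symmetric] by (simp add: field_simps power2_eq_square)
  have yT: "y = T1 + s * T2"
    using two four s0 unfolding T1_def T2_def by (simp add: field_simps)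
  have relT: "T1 ^ 2 - \<iota> a * T2 ^ 2 = F"
  proof -
    have "\<iota> a * T2 ^ 2 = (y - F / y) ^ 2 / 4"
      unfolding T2_def sqrt_a[symmetric] using s0 four by (simp add: power2_eq_square field_simps)
    thus ?thesis unfolding T1_def using y0 four by (simp add: power2_eq_square field_simps)
  qed
  have ind1: "I.indep2 x T1" by (rule I.indep2_T[OF ind_xy rel])
  have xT1: "x \<noteq> T1"
  proof
    assume xt: "x = T1"
    have "I.ev x T1 ([:[:0, 1:]:] - [:0, 1:]) = 0" using xt by simp
    hence "([:[:0, 1:]:] - [:0, 1:] :: 'k poly poly) = 0" using ind1 unfolding I.indep2_def by blast
    hence "coeff ([:[:0, 1:]:] - [:0, 1:] :: 'k poly poly) 1 = 0" by simp
    thus False by simp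
  qed
  define E where "E = I.FR x T1"
  have E_sf: "is_subfield E" unfolding E_def by (rule I.FR_subfield)
  have E_gen: "E = gen_field (range \<iota> \<union> {x, T1})" unfolding E_def by (rule I.FR_gen[symmetric])
  have relT2: "\<iota> a * T2 ^ 2 = T1 ^ 2 - I.pe f x"
  proof -
    have "\<iota> a * T2 ^ 2 = T1 ^ 2 - (T1 ^ 2 - \<iota> a * T2 ^ 2)" by simp
    also have "\<dots> = T1 ^ 2 - I.pe f x" by (simp only: relT Fpe)
    finally show ?thesis .
  qed
  have T2sq: "T2 * T2 \<in> E" unfolding E_def by (rule I.sq_in_FR(2)[OF a0 relT2])
  have T2n: "T2 \<notin> E" unfolding E_def by (rule I.notin_FR[OF ind1 nsq relT2])
  define M where "M = qext E T2"
  have M_sf: "is_subfield M" unfolding M_def by (rule qext_subfield[OF E_sf T2sq])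
  have M_gen: "M = gen_field (range \<iota> \<union> {x, T1, T2})"
    unfolding M_def E_def by (rule I.qext_FR_gen) (use T2sq E_def in simp)
  have EM: "E \<subseteq> M" unfolding M_def by (rule qext_base[OF E_sf])
  have T2M: "T2 \<in> M" unfolding M_def by (rule qext_z[OF E_sf])
  have xE: "x \<in> E" "T1 \<in> E" "range \<iota> \<subseteq> E"
    using gen_field_incl[of "range \<iota> \<union> {x, T1}"] unfolding E_gen by auto
  have L_sf: "is_subfield Lxy" unfolding Lxy_def by (rule gen_field_is_subfield)
  have KL: "K \<subseteq> Lxy" and xL: "x \<in> Lxy" and yL: "y \<in> Lxy"
    using gen_field_incl[of "K \<union> {x, y}"] unfolding Lxy_def by auto
  have sK: "s \<in> K" using gen_field_incl[of "range \<iota> \<union> {s}"] unfolding K_def by auto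
  have sL: "s \<in> Lxy" using sK KL by auto
  have rL: "range \<iota> \<subseteq> Lxy" using Kr KL by auto
  have FL: "F \<in> Lxy" unfolding Fpe by (rule I.pe_in_subfield[OF L_sf rL xL])
  have twoL: "(2::'o) \<in> Lxy" using rL I.j_numeral[of "num.Bit0 num.One"] by (metis rangeI subsetD)
  have T1L: "T1 \<in> Lxy" unfolding T1_def using FL yL twoL
    by (intro sf_div[OF L_sf] sf_add[OF L_sf]) auto
  have T2L: "T2 \<in> Lxy" unfolding T2_def using FL yL twoL sL
    by (intro sf_div[OF L_sf] sf_diff[OF L_sf] sf_mult[OF L_sf]) auto
  have sadd: "\<sigma> (u + v) = \<sigma> u + \<sigma> v" if "u \<in> Lxy" "v \<in> Lxy" for u v using \<sigma>_hom that by blast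
  have smul: "\<sigma> (u * v) = \<sigma> u * \<sigma> v" if "u \<in> Lxy" "v \<in> Lxy" for u v using \<sigma>_hom that by blast
  have s1: "\<sigma> 1 = 1" using \<sigma>_k[rule_format, of 1] by simp
  have s0': "\<sigma> 0 = 0" using \<sigma>_k[rule_format, of 0] by simp
  have sneg: "\<sigma> (- u) = - \<sigma> u" if "u \<in> Lxy" for u
  proof -
    have "\<sigma> u + \<sigma> (- u) = \<sigma> (u + - u)" using sadd[OF that sf_neg[OF L_sf that]] by simp
    thus ?thesis using s0' by (simp add: eq_neg_iff_add_eq_0 add.commute)
  qed
  have sinv: "\<sigma> (inverse u) = inverse (\<sigma> u)" if "u \<in> Lxy" for u
  proof (cases "u = 0")
    case True thus ?thesis using s0' by simp
  next
    case False
    have "\<sigma> u * \<sigma> (inverse u) = 1" using smul[OF that sf_inv[OF L_sf that]] False s1 by simp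
    thus ?thesis by (simp add: inverse_unique)
  qed
  have sdiv: "\<sigma> (u / v) = \<sigma> u / \<sigma> v" if "u \<in> Lxy" "v \<in> Lxy" for u v
    using smul[OF that(1) sf_inv[OF L_sf that(2)]] sinv[OF that(2)] by (simp add: divide_inverse)
  have sdiff: "\<sigma> (u - v) = \<sigma> u - \<sigma> v" if "u \<in> Lxy" "v \<in> Lxy" for u v
    using sadd[OF that(1) sf_neg[OF L_sf that(2)]] sneg[OF that(2)] by simp
  define Fix where "Fix = {u \<in> Lxy. \<sigma> u = u}"
  have Fix_sf: "is_subfield Fix"
    unfolding is_subfield_def Fix_def
    using sf_0[OF L_sf] sf_1[OF L_sf] s0' s1 sf_add[OF L_sf] sf_mult[OF L_sf] sf_neg[OF L_sf] sf_inv[OF L_sf]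
      sadd smul sneg sinv by auto
  have rFix: "range \<iota> \<subseteq> Fix" using rL \<sigma>_k unfolding Fix_def by auto
  have xFix: "x \<in> Fix" using xL \<sigma>_x unfolding Fix_def by auto
  have FFix: "F \<in> Fix" unfolding Fpe by (rule I.pe_in_subfield[OF Fix_sf rFix xFix])
  have sF: "\<sigma> F = F" using FFix unfolding Fix_def by auto
  have s2: "\<sigma> 2 = 2" using \<sigma>_k[rule_format, of 2] I.j_numeral[of "num.Bit0 num.One"] by simp
  have FyL: "F / y \<in> Lxy" using FL yL by (rule sf_div[OF L_sf])
  have sFy: "\<sigma> (F / y) = y" using sdiv[OF FL yL] sF \<sigma>_y F0 y0 unfolding F_def by simp
  have sy: "\<sigma> y = F / y" using \<sigma>_y unfolding F_def .
  have T1Fix: "T1 \<in> Fix"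
  proof -
    have "\<sigma> T1 = \<sigma> (y + F / y) / \<sigma> 2" unfolding T1_def
      by (rule sdiv) (use yL FyL twoL sf_add[OF L_sf] in auto)
    also have "\<dots> = T1" unfolding T1_def using sadd[OF yL FyL] sy sFy s2 by simp
    finally show ?thesis using T1L unfolding Fix_def by auto
  qed
  have T2Fix: "T2 \<in> Fix"
  proof -
    have "\<sigma> T2 = \<sigma> (y - F / y) / \<sigma> (2 * s)" unfolding T2_def
      by (rule sdiv) (use yL FyL twoL sL sf_diff[OF L_sf] sf_mult[OF L_sf] in auto)
    also have "\<dots> = (F / y - y) / (2 * (- s))" using sdiff[OF yL FyL] sy sFy s2 smul[OF twoL sL] \<sigma>_s by simp
    also have "\<dots> = - ((F / y - y) / (2 * s))" by simp
    also have "\<dots> = (- (F / y - y)) / (2 * s)" by (rule minus_divide_left)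
    also have "\<dots> = T2" unfolding T2_def by simp
    finally show ?thesis using T2L unfolding Fix_def by auto
  qed
  have EFix: "E \<subseteq> Fix" unfolding E_gen by (rule gen_field_min[OF Fix_sf]) (use rFix xFix T1Fix in auto)
  have MFix: "M \<subseteq> Fix" unfolding M_def by (rule qext_min[OF Fix_sf EFix T2Fix])
  have ssM: "s * s \<in> M" using sqrt_a xE(3) EM by auto
  have Ms_sf: "is_subfield (qext M s)" by (rule qext_subfield[OF M_sf ssM])
  have LMs: "Lxy \<subseteq> qext M s"
  proof -
    have rMs: "range \<iota> \<subseteq> qext M s" using xE(3) EM qext_base[OF M_sf, of s] by auto
    have "K \<subseteq> qext M s" unfolding K_def
      by (rule gen_field_min[OF Ms_sf]) (use rMs qext_z[OF M_sf, of s] in auto)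
    moreover have "x \<in> qext M s" using xE(1) EM qext_base[OF M_sf, of s] by auto
    moreover have "y \<in> qext M s" unfolding yT using xE(2) EM T2M by (intro qext_I) auto
    ultimately show ?thesis unfolding Lxy_def by (intro gen_field_min[OF Ms_sf]) auto
  qed
  have FixM: "Fix \<subseteq> M"
  proof
    fix w assume w: "w \<in> Fix"
    hence "w \<in> qext M s" using LMs unfolding Fix_def by auto
    then obtain p q where pq: "p \<in> M" "q \<in> M" "w = p + s * q" unfolding qext_def by auto
    have pF: "p \<in> Fix" "q \<in> Fix" using pq MFix by auto
    hence pL: "p \<in> Lxy" "q \<in> Lxy" and sp: "\<sigma> p = p" "\<sigma> q = q" unfolding Fix_def by auto
    have sqL: "s * q \<in> Lxy" by (rule sf_mult[OF L_sf sL pL(2)])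
    have "\<sigma> w = p - s * q" unfolding pq(3) using sadd[OF pL(1) sqL] smul[OF sL pL(2)] sp \<sigma>_s by simp
    moreover have "\<sigma> w = w" using w unfolding Fix_def by auto
    ultimately have "2 * (s * q) = 0" using pq(3) by (simp add: algebra_simps)
    hence "q = 0" using two s0 by simp
    thus "w \<in> M" using pq by simp
  qed
  have FixEq: "Fix = M" using FixM MFix by auto
  have trd: "trdeg_eq (range \<iota>) Fix 2"
    unfolding trdeg_eq_def
  proof (intro exI[of _ "{x, T1}"] conjI ballI)
    show "{x, T1} \<subseteq> Fix" using xFix T1Fix by auto
    show "finite {x, T1}" by simp
    show "card {x, T1} = 2" using xT1 by simp
    show "alg_indep (range \<iota>) {x, T1}" by (rule I.indep2_alg_indep[OF ind1 xT1])
    fix e assume "e \<in> Fix"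
    hence "e \<in> qext E T2" using FixEq unfolding M_def by simp
    hence "algebraic_over E e" by (rule qext_alg[OF E_sf T2sq])
    thus "algebraic_over (gen_field (range \<iota> \<union> {x, T1})) e" using E_gen by simp
  qed
  have part1: "\<exists>t1 t2. t1 \<in> {u \<in> Lxy. \<sigma> u = u} \<and> t2 \<in> {u \<in> Lxy. \<sigma> u = u} \<and>
            {u \<in> Lxy. \<sigma> u = u} = gen_field (range \<iota> \<union> {x, t1, t2}) \<and>
            trdeg_eq (range \<iota>) {u \<in> Lxy. \<sigma> u = u} 2 \<and>
            t1 ^ 2 - \<iota> a * t2 ^ 2 = poly (map_poly \<iota> f) x"
    using T1Fix T2Fix FixEq M_gen trd relT unfolding Fix_def F_def by blast
  have part2: "k_iso j L0 \<iota> Fix"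
    if hyp: "field_emb j \<and> L0 = gen_field (range j \<union> {x0, t1, t2}) \<and>
            trdeg_eq (range j) L0 2 \<and> t1 ^ 2 - j a * t2 ^ 2 = poly (map_poly j f) x0"
    for j :: "'k \<Rightarrow> 'l::field" and x0 t1 t2 L0
  proof -
    have embj: "field_emb j" and L0: "L0 = gen_field (range j \<union> {x0, t1, t2})"
      and tr: "trdeg_eq (range j) L0 2" and rel0: "t1 ^ 2 - j a * t2 ^ 2 = poly (map_poly j f) x0"
      using hyp by auto
    interpret J: kemb j by unfold_locales (rule embj)
    interpret JI: two_emb j \<iota> by unfold_locales
    have rel0': "t1 ^ 2 - j a * t2 ^ 2 = J.pe f x0" using rel0 unfolding J.pe_def .
    obtain B where B: "B \<subseteq> L0" "card B = 2" "alg_indep (range j) B"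
      using tr unfolding trdeg_eq_def by blast
    obtain b1 b2 where b: "B = {b1, b2}" "b1 \<noteq> b2" using B(2) by (meson card_2_iff)
    have ind0: "J.indep2 x0 t1"
    proof (rule ccontr)
      assume ni: "\<not> J.indep2 x0 t1"
      obtain R where R: "is_subfield R" "range j \<subseteq> R" "x0 \<in> R" "t1 \<in> R" "t2 \<in> R"
        "\<forall>b1\<in>R. \<forall>b2\<in>R. b1 \<noteq> b2 \<longrightarrow> \<not> alg_indep (range j) {b1, b2}"
        using J.dep_case[OF rel0' a0 ni] by blast
      have "L0 \<subseteq> R" unfolding L0 by (rule gen_field_min[OF R(1)]) (use R in auto)
      hence "b1 \<in> R" "b2 \<in> R" using B(1) b(1) by auto
      thus False using R(6) b B(3) by auto
    qed
    have rel0'': "j a * t2 ^ 2 = t1 ^ 2 - J.pe f x0"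
    proof -
      have "j a * t2 ^ 2 = t1 ^ 2 - (t1 ^ 2 - j a * t2 ^ 2)" by simp
      also have "\<dots> = t1 ^ 2 - J.pe f x0" by (simp only: rel0')
      finally show ?thesis .
    qed
    define E0 where "E0 = J.FR x0 t1"
    have E0_sf: "is_subfield E0" unfolding E0_def by (rule J.FR_subfield)
    have t2sq: "t2 * t2 \<in> E0" unfolding E0_def by (rule J.sq_in_FR(2)[OF a0 rel0''])
    have t2n: "t2 \<notin> E0" unfolding E0_def by (rule J.notin_FR[OF ind0 nsq rel0''])
    have L0q: "L0 = qext E0 t2" unfolding L0 E0_def by (rule J.qext_FR_gen[symmetric]) (use t2sq E0_def in simp)
    define \<phi> where "\<phi> = JI.phi x0 t1 x T1"
    have iso: "bij_betw \<phi> E0 E \<and> (\<forall>a\<in>E0. \<forall>b\<in>E0. \<phi> (a + b) = \<phi> a + \<phi> b \<and> \<phi> (a * b) = \<phi> a * \<phi> b)"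
      unfolding \<phi>_def E0_def E_def by (rule JI.phi_iso[OF ind0 ind1])
    have phf: "\<phi> (J.ev x0 t1 P / J.ev x0 t1 Q) = I.ev x T1 P / I.ev x T1 Q" if "Q \<noteq> 0" for P Q
      unfolding \<phi>_def by (rule JI.phi_frac[OF ind0 ind1 that])
    have Qa: "[:[:a:]:] \<noteq> (0 :: 'k poly poly)" using a0 by simp
    have TT: "T2 * T2 = \<phi> (t2 * t2)"
      unfolding J.sq_in_FR(1)[OF a0 rel0''] phf[OF Qa] by (rule I.sq_in_FR(1)[OF a0 relT2])
    obtain \<psi> where \<psi>: "bij_betw \<psi> (qext E0 t2) (qext E T2)"
      "\<forall>a\<in>qext E0 t2. \<forall>b\<in>qext E0 t2. \<psi> (a + b) = \<psi> a + \<psi> b \<and> \<psi> (a * b) = \<psi> a * \<psi> b"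
      "\<forall>a\<in>E0. \<psi> a = \<phi> a"
      using qext_iso[OF E0_sf E_sf iso[THEN conjunct1] iso[THEN conjunct2] t2n t2sq T2n TT] by blast
    have jc: "\<psi> (j c) = \<iota> c" for c
    proof -
      have "j c = J.ev x0 t1 [:[:c:]:] / J.ev x0 t1 1" by simp
      hence "j c \<in> E0" unfolding E0_def using J.FR_I by metis
      hence "\<psi> (j c) = \<phi> (j c)" using \<psi>(3) by auto
      also have "\<dots> = \<phi> (J.ev x0 t1 [:[:c:]:] / J.ev x0 t1 1)" by simp
      also have "\<dots> = \<iota> c" by (subst phf) simp_all
      finally show ?thesis .
    qed
    show ?thesis unfolding k_iso_def L0q FixEq M_def using \<psi>(1,2) jc by blast
  qed
  show ?thesis using part1 part2 unfolding Fix_def by blast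
qed

end
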